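(* Let $\Gamma$ be a compact metric graph with edge lengths $l_1,\dots,l_E$ and a self-adjoint one-particle Laplacian $(-\Delta_1,\mathcal{D}_1(P_1,L_1))$. Assume $L_1$ has at least one positive eigenvalue and let $L_{\max}>0$ be its largest eigenvalue. For $\eta>0$ let $-\kappa_{\min}^2(\eta)$ denote the lowest eigenvalue of $-\Delta_1(P_1,L_1)$ on the graph with edge lengths $\eta l_1,\dots,\eta l_E$ (with $P_1,L_1$ unchanged). Then $-\kappa_{\min}^2(\eta)<0$ for all sufficiently large $\eta$, and $$\lim_{\eta\to\infty}\bigl(-\kappa^2_{\min}(\eta)\bigr)=-L_{\max}^2 .$$
   Context: A compact metric graph $\Gamma$ is a finite connected graph with edges $e=1,\dots,E$, each identified with an interval $[0,l_e]$. $L^2(\Gamma)=\bigoplus_e L^2(0,l_e)$, $H^m(\Gamma)=\bigoplus_eH^m(0,l_e)$. Boundary values of $F=(f_1,\dots,f_E)$: $F_{bv}=(f_1(0),\dots,f_E(0),f_1(l_1),\dots,f_E(l_E))\in\mathbb{C}^{2E}$, $F'_{bv}=(f_1'(0),\dots,f_E'(0),-f_1'(l_1),\dots,-f_E'(l_E))$. Given an orthogonal projector $P_1$ on $\mathbb{C}^{2E}$ and a self-adjoint map $L_1$ on $\ker P_1$, $(-\Delta_1,\mathcal{D}_1(P_1,L_1))$ is the self-adjoint operator associated with the closed semi-bounded form $Q_1[F]=\sum_e\int_0^{l_e}|f_e'|^2\,\mathrm{d}x-\langle F_{bv},L_1F_{bv}\rangle$ on $\{F\in H^1(\Gamma):P_1F_{bv}=0\}$;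 it acts as $-f_e''$ on each edge, has domain $\{F\in H^2(\Gamma):P_1F_{bv}=0,\ (1-P_1)F'_{bv}+L_1(1-P_1)F_{bv}=0\}$, and has discrete spectrum bounded below. *)

theory Defs
  imports "HOL-Analysis.Analysis"
begin

(* Vectors in C^n are functions nat => complex (entries >= n irrelevant / zero),
   n x n matrices are functions nat => nat => complex. *)

definition cmv :: "nat \<Rightarrow> (nat \<Rightarrow> nat \<Rightarrow> complex) \<Rightarrow> (nat \<Rightarrow> complex) \<Rightarrow> nat \<Rightarrow> complex" where
  "cmv n A v = (\<lambda>i. if i < n then (\<Sum>j<n. A i j * v j) else 0)"

definition cinner :: "nat \<Rightarrow> (nat \<Rightarrow> complex) \<Rightarrow> (nat \<Rightarrow> complex) \<Rightarrow> complex" where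
  "cinner n u v = (\<Sum>i<n. cnj (u i) * v i)"

definition orth_proj :: "nat \<Rightarrow> (nat \<Rightarrow> nat \<Rightarrow> complex) \<Rightarrow> bool" where
  "orth_proj n P \<longleftrightarrow> (\<forall>i<n. \<forall>j<n. (\<Sum>k<n. P i k * P k j) = P i j \<and> P i j = cnj (P j i))"

definition kerP :: "nat \<Rightarrow> (nat \<Rightarrow> nat \<Rightarrow> complex) \<Rightarrow> (nat \<Rightarrow> complex) set" where
  "kerP n P = {v. (\<forall>i. n \<le> i \<longrightarrow> v i = 0) \<and> cmv n P v = (\<lambda>_. 0)}"

definition selfadj_on_ker :: "nat \<Rightarrow> (nat \<Rightarrow> nat \<Rightarrow> complex) \<Rightarrow> (nat \<Rightarrow> nat \<Rightarrow> complex) \<Rightarrow> bool" where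
  "selfadj_on_ker n P L \<longleftrightarrow>
     (\<forall>v\<in>kerP n P. cmv n L v \<in> kerP n P) \<and>
     (\<forall>v\<in>kerP n P. \<forall>w\<in>kerP n P. cinner n (cmv n L v) w = cinner n v (cmv n L w))"

definition ker_eigenvalues :: "nat \<Rightarrow> (nat \<Rightarrow> nat \<Rightarrow> complex) \<Rightarrow> (nat \<Rightarrow> nat \<Rightarrow> complex) \<Rightarrow> real set" where
  "ker_eigenvalues n P L =
     {\<mu>. \<exists>v\<in>kerP n P. v \<noteq> (\<lambda>_. 0) \<and> cmv n L v = (\<lambda>i. complex_of_real \<mu> * v i)}"

definition bv :: "nat \<Rightarrow> (nat \<Rightarrow> real) \<Rightarrow> (nat \<Rightarrow> real \<Rightarrow> complex) \<Rightarrow> nat \<Rightarrow> complex" where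
  "bv E l F = (\<lambda>i. if i < E then F i 0 else if i < 2 * E then F (i - E) (l (i - E)) else 0)"

definition dbv :: "nat \<Rightarrow> (nat \<Rightarrow> real) \<Rightarrow> (nat \<Rightarrow> real \<Rightarrow> complex) \<Rightarrow> nat \<Rightarrow> complex" where
  "dbv E l F' = (\<lambda>i. if i < E then F' i 0 else if i < 2 * E then - F' (i - E) (l (i - E)) else 0)"

definition laplacian_eigenvalue ::
  "nat \<Rightarrow> (nat \<Rightarrow> real) \<Rightarrow> (nat \<Rightarrow> nat \<Rightarrow> complex) \<Rightarrow> (nat \<Rightarrow> nat \<Rightarrow> complex) \<Rightarrow> real \<Rightarrow> bool" where
  "laplacian_eigenvalue E l P L lam \<longleftrightarrow>
    (\<exists>F F' F''.
      (\<forall>e<E. \<forall>x\<in>{0..l e}.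
         (F e has_vector_derivative F' e x) (at x within {0..l e}) \<and>
         (F' e has_vector_derivative F'' e x) (at x within {0..l e}) \<and>
         - F'' e x = complex_of_real lam * F e x) \<and>
      (\<exists>e<E. \<exists>x\<in>{0..l e}. F e x \<noteq> 0) \<and>
      cmv (2 * E) P (bv E l F) = (\<lambda>_. 0) \<and>
      (let a = bv E l F; b = dbv E l F';
           a' = (\<lambda>i. a i - cmv (2 * E) P a i);
           b' = (\<lambda>i. b i - cmv (2 * E) P b i)
       in (\<lambda>i. b' i + cmv (2 * E) L a' i) = (\<lambda>_. 0)))"

definition lowest_eigenvalue ::
  "nat \<Rightarrow> (nat \<Rightarrow> real) \<Rightarrow> (nat \<Rightarrow> nat \<Rightarrow> complex) \<Rightarrow> (nat \<Rightarrow> nat \<Rightarrow> complex) \<Rightarrow> real" where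
  "lowest_eigenvalue E l P L = Inf {lam. laplacian_eigenvalue E l P L lam}"

end

theory Submission
  imports Defs
begin


definition nsq :: "nat \<Rightarrow> (nat \<Rightarrow> complex) \<Rightarrow> real" where
  "nsq n v = (\<Sum>i<n. (cmod (v i))\<^sup>2)"

lemma cinner_add_right: "cinner n u (\<lambda>i. v i + w i) = cinner n u v + cinner n u w"
  by (simp add: cinner_def distrib_left sum.distrib)
lemma cinner_diff_right: "cinner n u (\<lambda>i. v i - w i) = cinner n u v - cinner n u w"
  by (simp add: cinner_def right_diff_distrib sum_subtractf)
lemma cinner_scale_right: "cinner n u (\<lambda>i. c * v i) = c * cinner n u v"
  by (simp add: cinner_def sum_distrib_left mult_ac)
lemma cinner_add_left: "cinner n (\<lambda>i. v i + w i) u = cinner n v u + cinner n w u"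
  by (simp add: cinner_def distrib_right sum.distrib)
lemma cinner_diff_left: "cinner n (\<lambda>i. v i - w i) u = cinner n v u - cinner n w u"
  by (simp add: cinner_def left_diff_distrib sum_subtractf)
lemma cinner_scale_left: "cinner n (\<lambda>i. c * v i) u = cnj c * cinner n v u"
  by (simp add: cinner_def sum_distrib_left mult_ac)
lemma cinner_cnj: "cnj (cinner n u v) = cinner n v u"
  by (simp add: cinner_def mult_ac)
lemma cinner_zero_right[simp]: "cinner n u (\<lambda>_. 0) = 0"
  by (simp add: cinner_def)
lemma cinner_cong: "(\<And>i. i < n \<Longrightarrow> v i = w i) \<Longrightarrow> cinner n u v = cinner n u w"
  by (simp add: cinner_def)
lemma cinner_cong_left: "(\<And>i. i < n \<Longrightarrow> v i = w i) \<Longrightarrow> cinner n v u = cinner n w u"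
  by (simp add: cinner_def)

lemma cinner_self: "cinner n v v = complex_of_real (nsq n v)"
proof -
  have "cnj (v i) * v i = complex_of_real ((cmod (v i))\<^sup>2)" for i
    by (metis complex_norm_square mult.commute of_real_power)
  then show ?thesis by (simp add: cinner_def nsq_def)
qed

lemma nsq_nonneg: "nsq n v \<ge> 0"
  by (simp add: nsq_def sum_nonneg)

lemma nsq_eq_0: "nsq n v = 0 \<longleftrightarrow> (\<forall>i<n. v i = 0)"
  unfolding nsq_def by (subst sum_nonneg_eq_0_iff) auto

lemma nsq_scale: "nsq n (\<lambda>i. c * v i) = (cmod c)\<^sup>2 * nsq n v"
  by (simp add: nsq_def sum_distrib_left norm_mult power_mult_distrib)

lemma cinner_cmv: "cinner n u (cmv n A v) = (\<Sum>i<n. cnj (u i) * (\<Sum>j<n. A i j * v j))"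
  by (simp add: cinner_def cmv_def)

lemma orth_proj_herm:
  assumes "orth_proj n P"
  shows "cinner n u (cmv n P v) = cinner n (cmv n P u) v"
proof -
  have h: "\<And>i j. i<n \<Longrightarrow> j<n \<Longrightarrow> cnj (P j i) = P i j"
    using assms unfolding orth_proj_def by (metis complex_cnj_cnj)
  have "cinner n (cmv n P u) v = (\<Sum>j<n. cnj (\<Sum>i<n. P j i * u i) * v j)"
    by (simp add: cinner_def cmv_def)
  also have "\<dots> = (\<Sum>j<n. \<Sum>i<n. cnj (u i) * P i j * v j)"
  proof (intro sum.cong refl)
    fix j assume j: "j \<in> {..<n}"
    have "cnj (\<Sum>i<n. P j i * u i) * v j = (\<Sum>i<n. cnj (P j i) * cnj (u i) * v j)"
      by (simp add: sum_distrib_right)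
    also have "\<dots> = (\<Sum>i<n. cnj (u i) * P i j * v j)"
      using j by (intro sum.cong refl) (simp add: h)
    finally show "cnj (\<Sum>i<n. P j i * u i) * v j = (\<Sum>i<n. cnj (u i) * P i j * v j)" .
  qed
  also have "\<dots> = (\<Sum>i<n. \<Sum>j<n. cnj (u i) * P i j * v j)"
    by (rule sum.swap)
  also have "\<dots> = cinner n u (cmv n P v)"
    by (simp add: cinner_cmv sum_distrib_left mult_ac)
  finally show ?thesis by simp
qed

lemma kerP_cinner_P:
  assumes "orth_proj n P" "v \<in> kerP n P"
  shows "cinner n v (cmv n P w) = 0"
proof -
  have "cmv n P v = (\<lambda>_. 0)" using assms(2) by (simp add: kerP_def)
  then show ?thesis using orth_proj_herm[OF assms(1)] by (simp add: cinner_def)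
qed

lemma kerP_cinner_Q:
  assumes "orth_proj n P" "v \<in> kerP n P"
  shows "cinner n v (\<lambda>i. w i - cmv n P w i) = cinner n v w"
  using kerP_cinner_P[OF assms] by (simp add: cinner_diff_right)

lemma cmv_add: "cmv n A (\<lambda>i. v i + w i) = (\<lambda>i. cmv n A v i + cmv n A w i)"
  by (auto simp: cmv_def distrib_left sum.distrib)
lemma cmv_scale: "cmv n A (\<lambda>i. c * v i) = (\<lambda>i. c * cmv n A v i)"
  by (auto simp: cmv_def sum_distrib_left mult_ac)
lemma cmv_cong: "(\<And>i. i < n \<Longrightarrow> v i = w i) \<Longrightarrow> cmv n A v = cmv n A w"
  unfolding cmv_def by (intro ext) (auto intro!: sum.cong)

lemma kerP_add: "v \<in> kerP n P \<Longrightarrow> w \<in> kerP n P \<Longrightarrow> (\<lambda>i. v i + w i) \<in> kerP n P"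
  by (auto simp: kerP_def cmv_add fun_eq_iff)
lemma kerP_scale: "v \<in> kerP n P \<Longrightarrow> (\<lambda>i. c * v i) \<in> kerP n P"
  by (auto simp: kerP_def cmv_scale fun_eq_iff)
lemma kerP_P: "v \<in> kerP n P \<Longrightarrow> cmv n P v i = 0"
  by (auto simp: kerP_def fun_eq_iff)
lemma kerP_out: "v \<in> kerP n P \<Longrightarrow> n \<le> i \<Longrightarrow> v i = 0"
  by (auto simp: kerP_def)

lemma orth_proj_idem:
  assumes "orth_proj n P"
  shows "cmv n P (cmv n P v) = cmv n P v"
proof -
  have h: "\<And>i j. i<n \<Longrightarrow> j<n \<Longrightarrow> (\<Sum>k<n. P i k * P k j) = P i j"
    using assms unfolding orth_proj_def by blast
  show ?thesis
  proof
    fix i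
    show "cmv n P (cmv n P v) i = cmv n P v i"
    proof (cases "i < n")
      case True
      have "cmv n P (cmv n P v) i = (\<Sum>k<n. P i k * (\<Sum>j<n. P k j * v j))"
        using True by (simp add: cmv_def)
      also have "\<dots> = (\<Sum>k<n. \<Sum>j<n. P i k * P k j * v j)"
        by (simp add: sum_distrib_left mult_ac)
      also have "\<dots> = (\<Sum>j<n. \<Sum>k<n. P i k * P k j * v j)" by (rule sum.swap)
      also have "\<dots> = (\<Sum>j<n. P i j * v j)"
        using True by (intro sum.cong refl) (simp add: h flip: sum_distrib_right)
      finally show ?thesis using True by (simp add: cmv_def)
    qed (simp add: cmv_def)
  qed
qed

lemma Q_in_kerP:
  assumes "orth_proj n P" "\<And>i. n \<le> i \<Longrightarrow> w i = 0"
  shows "(\<lambda>i. w i - cmv n P w i) \<in> kerP n P"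
proof -
  have "cmv n P (\<lambda>i. w i - cmv n P w i) = (\<lambda>i. cmv n P w i - cmv n P (cmv n P w) i)"
    by (auto simp: cmv_def right_diff_distrib sum_subtractf)
  also have "\<dots> = (\<lambda>_. 0)" using orth_proj_idem[OF assms(1)] by simp
  finally show ?thesis using assms unfolding kerP_def by (auto simp: cmv_def)
qed



lemma cinner_expand_real:
  "cinner n (\<lambda>i. v i + complex_of_real t * u i) (\<lambda>i. a i + complex_of_real t * b i)
   = cinner n v a + complex_of_real t * cinner n v b + complex_of_real t * cinner n u a
     + complex_of_real (t\<^sup>2) * cinner n u b"
  by (simp add: cinner_def sum.distrib sum_distrib_left algebra_simps power2_eq_square)

lemma variational:
  assumes Vadd: "\<And>v w. v\<in>V \<Longrightarrow> w\<in>V \<Longrightarrow> (\<lambda>i. v i + w i) \<in> V"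
    and Vscale: "\<And>v c. v\<in>V \<Longrightarrow> (\<lambda>i. c * v i) \<in> V"
    and KV: "\<And>v. v\<in>V \<Longrightarrow> K v \<in> V"
    and Klin: "\<And>v w c. v\<in>V \<Longrightarrow> w\<in>V \<Longrightarrow> K (\<lambda>i. v i + c * w i) = (\<lambda>i. K v i + c * K w i)"
    and Ksym: "\<And>v w. v\<in>V \<Longrightarrow> w\<in>V \<Longrightarrow> cinner n v (K w) = cinner n (K v) w"
    and neg: "\<And>w. w\<in>V \<Longrightarrow> Re (cinner n w (K w)) \<le> 0"
    and v: "v\<in>V" and v0: "Re (cinner n v (K v)) = 0"
  shows "\<forall>i<n. K v i = 0"
proof -
  define u where "u = K v"
  have uV: "u \<in> V" using KV v u_def by simp
  define N where "N = nsq n u"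
  define c where "c = Re (cinner n u (K u))"
  have c: "c \<le> 0" using neg uV c_def by simp
  have key: "2 * t * N + t\<^sup>2 * c \<le> 0" for t
  proof -
    have wV: "(\<lambda>i. v i + complex_of_real t * u i) \<in> V" using Vadd Vscale v uV by blast
    have "K (\<lambda>i. v i + complex_of_real t * u i) = (\<lambda>i. K v i + complex_of_real t * K u i)"
      using Klin v uV by blast
    then have "cinner n (\<lambda>i. v i + complex_of_real t * u i) (K (\<lambda>i. v i + complex_of_real t * u i))
      = cinner n v (K v) + complex_of_real t * cinner n v (K u) + complex_of_real t * cinner n u (K v)
        + complex_of_real (t\<^sup>2) * cinner n u (K u)"
      by (simp add: cinner_expand_real)
    moreover have "cinner n v (K u) = cinner n u u" using Ksym[OF v uV] u_def by simp
    moreover have "cinner n u (K v) = cinner n u u" using u_def by simp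
    ultimately have "Re (cinner n (\<lambda>i. v i + complex_of_real t * u i) (K (\<lambda>i. v i + complex_of_real t * u i)))
       = 2 * t * N + t\<^sup>2 * c"
      using v0 by (simp add: cinner_self N_def c_def)
    then show ?thesis using neg[OF wV] by simp
  qed
  have "N = 0"
  proof (rule ccontr)
    assume "N \<noteq> 0"
    then have Np: "N > 0" using nsq_nonneg[of n u] N_def by simp
    define t where "t = N / (1 - c)"
    have tp: "t > 0" using Np c t_def by simp
    have "2 * t * N + t\<^sup>2 * c \<le> 0" by (rule key)
    then have "t * (2 * N + t * c) \<le> 0" by (simp add: power2_eq_square algebra_simps)
    then have "2 * N + t * c \<le> 0" using tp by (simp add: mult_le_0_iff)
    moreover have "t * c \<ge> - N"
    proof -
      have "t * c = N * c / (1 - c)" using t_def by simp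
      moreover have "N * c / (1 - c) \<ge> - N" using Np c
        by (simp add: field_simps)
      ultimately show ?thesis by simp
    qed
    ultimately show False using Np by simp
  qed
  then show ?thesis using nsq_eq_0 N_def u_def by simp
qed



lemma coord_cont [continuous_intros]:
  "continuous_on S (\<lambda>v::nat\<Rightarrow>complex. v i)"
  by (rule continuous_on_subset[OF continuous_on_product_coordinates]) simp

lemma coord_cont2 [continuous_intros]:
  "continuous_on S (\<lambda>p::real\<times>(nat\<Rightarrow>complex). snd p i)"
  by (rule continuous_on_compose2[OF continuous_on_product_coordinates continuous_on_snd]) auto

definition Sph :: "nat \<Rightarrow> (nat \<Rightarrow> nat \<Rightarrow> complex) \<Rightarrow> (nat \<Rightarrow> complex) set" where
  "Sph n P = {v \<in> kerP n P. nsq n v = 1}"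

lemma cont_nsq: "continuous_on S (\<lambda>v::nat\<Rightarrow>complex. nsq n v)"
  unfolding nsq_def by (intro continuous_intros)

lemma compact_box: "compact (PiE UNIV (\<lambda>i::nat. if i < n then cball (0::complex) 1 else {0}))"
proof -
  have "compactin (product_topology (\<lambda>i. euclidean) UNIV)
          (PiE UNIV (\<lambda>i::nat. if i < n then cball (0::complex) 1 else {0}))"
    by (subst compactin_PiE) auto
  then show ?thesis by (simp add: euclidean_product_topology)
qed

lemma compact_Sph: "compact (Sph n P)"
proof -
  define B where "B = PiE UNIV (\<lambda>i::nat. if i < n then cball (0::complex) 1 else {0})"
  have cl1: "closed {v::nat\<Rightarrow>complex. \<forall>i. n \<le> i \<longrightarrow> v i = 0}"
  proof (rule closed_Collect_all)
    fix i
    show "closed {v::nat\<Rightarrow>complex. n \<le> i \<longrightarrow> v i = 0}"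
    proof (cases "n \<le> i")
      case True
      then show ?thesis using closed_Collect_eq[of "\<lambda>v::nat\<Rightarrow>complex. v i" "\<lambda>_. 0"]
        by (simp add: continuous_on_const)
    qed simp
  qed
  have cl2: "closed {v::nat\<Rightarrow>complex. \<forall>i. cmv n P v i = 0}"
  proof (rule closed_Collect_all)
    fix i
    show "closed {v::nat\<Rightarrow>complex. cmv n P v i = 0}"
    proof (cases "i < n")
      case True
      have "continuous_on UNIV (\<lambda>v::nat\<Rightarrow>complex. \<Sum>j<n. P i j * v j)"
        by (intro continuous_intros)
      then show ?thesis using True closed_Collect_eq[of "\<lambda>v::nat\<Rightarrow>complex. \<Sum>j<n. P i j * v j" "\<lambda>_. 0"]
        by (simp add: continuous_on_const cmv_def)
    qed (simp add: cmv_def)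
  qed
  have cl3: "closed {v::nat\<Rightarrow>complex. nsq n v = 1}"
    by (rule closed_Collect_eq) (auto intro: cont_nsq continuous_on_const)
  have "Sph n P = B \<inter> ({v. \<forall>i. n \<le> i \<longrightarrow> v i = 0} \<inter> {v. \<forall>i. cmv n P v i = 0} \<inter> {v. nsq n v = 1})"
  proof (intro set_eqI iffI)
    fix v assume v: "v \<in> Sph n P"
    have "cmod (v i) \<le> 1" if "i < n" for i
    proof -
      have "(cmod (v i))\<^sup>2 \<le> nsq n v" unfolding nsq_def
        using that by (intro member_le_sum) auto
      then have "(cmod (v i))\<^sup>2 \<le> 1\<^sup>2" using v by (simp add: Sph_def)
      then show ?thesis by (rule power2_le_imp_le) simp
    qed
    then show "v \<in> B \<inter> ({v. \<forall>i. n \<le> i \<longrightarrow> v i = 0} \<inter> {v. \<forall>i. cmv n P v i = 0} \<inter> {v. nsq n v = 1})"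
      using v by (auto simp: Sph_def kerP_def B_def PiE_iff)
  next
    fix v assume v: "v \<in> B \<inter> ({v. \<forall>i. n \<le> i \<longrightarrow> v i = 0} \<inter> {v. \<forall>i. cmv n P v i = 0} \<inter> {v. nsq n v = 1})"
    then have "cmv n P v = (\<lambda>_. 0)" by (intro ext) simp
    then show "v \<in> Sph n P" using v unfolding Sph_def kerP_def by simp
  qed
  moreover have "compact B" unfolding B_def by (rule compact_box)
  moreover have "closed ({v. \<forall>i. n \<le> i \<longrightarrow> v i = 0} \<inter> {v. \<forall>i. cmv n P v i = 0} \<inter> {v. nsq n v = 1})"
    using cl1 cl2 cl3 by (intro closed_Int)
  ultimately show ?thesis by (simp add: compact_Int_closed)
qed

definition ray :: "nat \<Rightarrow> (nat \<Rightarrow> nat \<Rightarrow> complex) \<Rightarrow> (nat \<Rightarrow> complex) \<Rightarrow> real" where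
  "ray n L v = Re (cinner n v (cmv n L v))"

lemma cont_ray: "continuous_on S (ray n L)"
  unfolding ray_def[abs_def] cinner_cmv by (intro continuous_intros)

lemma ray_scale: "ray n L (\<lambda>i. c * v i) = (cmod c)\<^sup>2 * ray n L v"
proof -
  have "cinner n (\<lambda>i. c * v i) (cmv n L (\<lambda>i. c * v i)) = (cnj c * c) * cinner n v (cmv n L v)"
    by (simp add: cmv_scale cinner_scale_left cinner_scale_right)
  also have "cnj c * c = complex_of_real ((cmod c)\<^sup>2)"
    by (metis complex_norm_square mult.commute of_real_power)
  finally show ?thesis by (simp add: ray_def)
qed

lemma normalize_Sph:
  assumes "v \<in> kerP n P" "nsq n v > 0"
  shows "(\<lambda>i. complex_of_real (1 / sqrt (nsq n v)) * v i) \<in> Sph n P"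
proof -
  have "nsq n (\<lambda>i. complex_of_real (1 / sqrt (nsq n v)) * v i) = 1"
    using assms(2) nsq_scale[of n "complex_of_real (1 / sqrt (nsq n v))" v]
    by (simp add: power_divide del: of_real_divide)
  then show ?thesis using kerP_scale[OF assms(1), of "complex_of_real (1 / sqrt (nsq n v))"]
    unfolding Sph_def by blast
qed



lemma nsq_pos_kerP:
  assumes "v \<in> kerP n P" "v \<noteq> (\<lambda>_. 0)"
  shows "nsq n v > 0"
proof -
  obtain i where i: "v i \<noteq> 0" using assms(2) by auto
  then have "i < n" using assms(1) kerP_out by (metis not_le)
  then have "nsq n v \<noteq> 0" using i nsq_eq_0 by blast
  then show ?thesis using nsq_nonneg[of n v] by simp
qed

lemma nsq0_cinner:
  assumes "nsq n w = 0" shows "cinner n w u = 0"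
  using assms nsq_eq_0 by (simp add: cinner_def)

lemma ray_eig:
  assumes "cmv n L v = (\<lambda>i. complex_of_real \<mu> * v i)"
  shows "ray n L v = \<mu> * nsq n v"
  using assms by (simp add: ray_def cinner_scale_right cinner_self)

lemma ray_max:
  assumes P: "orth_proj n P" and L: "selfadj_on_ker n P L" and ne: "ker_eigenvalues n P L \<noteq> {}"
  shows "\<exists>R vm. vm \<in> Sph n P \<and> cmv n L vm = (\<lambda>i. complex_of_real R * vm i)
              \<and> (\<forall>w\<in>kerP n P. ray n L w \<le> R * nsq n w)"
proof -
  obtain \<mu> v0 where v0: "v0 \<in> kerP n P" "v0 \<noteq> (\<lambda>_. 0)"
    using ne unfolding ker_eigenvalues_def by blast
  have "Sph n P \<noteq> {}" using normalize_Sph[OF v0(1) nsq_pos_kerP[OF v0]] by blast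
  then obtain vm where vm: "vm \<in> Sph n P" "\<And>y. y \<in> Sph n P \<Longrightarrow> ray n L y \<le> ray n L vm"
    using continuous_attains_sup[OF compact_Sph _ cont_ray] by blast
  define R where "R = ray n L vm"
  have bound: "ray n L w \<le> R * nsq n w" if w: "w \<in> kerP n P" for w
  proof (cases "nsq n w = 0")
    case True then show ?thesis by (simp add: ray_def nsq0_cinner)
  next
    case False
    then have Np: "nsq n w > 0" using nsq_nonneg[of n w] by simp
    have a: "ray n L (\<lambda>i. complex_of_real (1 / sqrt (nsq n w)) * w i) \<le> R"
      using vm(2)[OF normalize_Sph[OF w Np]] R_def by blast
    have b: "ray n L (\<lambda>i. complex_of_real (1 / sqrt (nsq n w)) * w i) = ray n L w / nsq n w"
      using Np by (subst ray_scale) (simp add: power_divide norm_divide)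
    have "ray n L w / nsq n w \<le> R" using a b by simp
    then show ?thesis using Np by (simp add: divide_le_eq mult.commute)
  qed
  define K where "K = (\<lambda>v. \<lambda>i. cmv n L v i + complex_of_real (-R) * v i)"
  have LV: "cmv n L v \<in> kerP n P" if "v \<in> kerP n P" for v
    using L that unfolding selfadj_on_ker_def by blast
  have Lsym: "cinner n (cmv n L v) w = cinner n v (cmv n L w)" if "v \<in> kerP n P" "w \<in> kerP n P" for v w
    using L that unfolding selfadj_on_ker_def by blast
  have "\<forall>i<n. K vm i = 0"
  proof (rule variational[where V="kerP n P" and K=K and v=vm])
    show "\<And>v w. v \<in> kerP n P \<Longrightarrow> w \<in> kerP n P \<Longrightarrow> (\<lambda>i. v i + w i) \<in> kerP n P" by (rule kerP_add)
    show "\<And>v c. v \<in> kerP n P \<Longrightarrow> (\<lambda>i. c * v i) \<in> kerP n P" by (rule kerP_scale)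
    show "\<And>v. v \<in> kerP n P \<Longrightarrow> K v \<in> kerP n P"
      unfolding K_def by (intro kerP_add kerP_scale LV)
    show "\<And>v w c. v \<in> kerP n P \<Longrightarrow> w \<in> kerP n P \<Longrightarrow> K (\<lambda>i. v i + c * w i) = (\<lambda>i. K v i + c * K w i)"
      unfolding K_def by (simp add: cmv_add cmv_scale algebra_simps)
    show "\<And>v w. v \<in> kerP n P \<Longrightarrow> w \<in> kerP n P \<Longrightarrow> cinner n v (K w) = cinner n (K v) w"
      unfolding K_def by (simp add: cinner_diff_left cinner_diff_right cinner_scale_left cinner_scale_right Lsym)
    show "\<And>w. w \<in> kerP n P \<Longrightarrow> Re (cinner n w (K w)) \<le> 0"
      unfolding K_def using bound
      by (simp add: cinner_diff_right cinner_scale_right cinner_self ray_def[symmetric])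
    show "vm \<in> kerP n P" using vm(1) by (simp add: Sph_def)
    show "Re (cinner n vm (K vm)) = 0"
      unfolding K_def using vm(1)
      by (simp add: cinner_diff_right cinner_scale_right cinner_self ray_def[symmetric] R_def Sph_def)
  qed
  then have "cmv n L vm = (\<lambda>i. complex_of_real R * vm i)"
    using vm(1) unfolding K_def Sph_def kerP_def
    by (intro ext) (auto simp: cmv_def not_less)
  then show ?thesis using vm(1) bound by blast
qed



lemma eig_ortho:
  assumes L: "selfadj_on_ker n P L" and "\<mu> \<noteq> \<nu>" and v: "v \<in> kerP n P" and w: "w \<in> kerP n P"
    and ev: "cmv n L v = (\<lambda>i. complex_of_real \<mu> * v i)" and ew: "cmv n L w = (\<lambda>i. complex_of_real \<nu> * w i)"
  shows "cinner n v w = 0"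
proof -
  have "cinner n (cmv n L v) w = cinner n v (cmv n L w)"
    using L v w unfolding selfadj_on_ker_def by blast
  then have "complex_of_real \<mu> * cinner n v w = complex_of_real \<nu> * cinner n v w"
    using ev ew by (simp add: cinner_scale_left cinner_scale_right)
  then have "(complex_of_real \<mu> - complex_of_real \<nu>) * cinner n v w = 0"
    by (simp add: algebra_simps)
  then show ?thesis using assms(2) by simp
qed

lemma cinner_sum_right: "cinner n x (\<lambda>j. \<Sum>a\<in>A. c a * y a j) = (\<Sum>a\<in>A. c a * cinner n x (y a))"
  unfolding cinner_def by (simp add: sum_distrib_left sum_distrib_right mult_ac sum.swap[of _ A])

lemma cinner_sum_left: "cinner n (\<lambda>j. \<Sum>a\<in>A. c a * y a j) x = (\<Sum>a\<in>A. cnj (c a) * cinner n (y a) x)"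
  unfolding cinner_def by (simp add: sum_distrib_left sum_distrib_right mult_ac sum.swap[of _ A])

lemma cinner_unit_left: "i < n \<Longrightarrow> cinner n (\<lambda>j. if j = i then 1 else 0) x = x i"
proof -
  assume i: "i < n"
  have eq: "(\<lambda>j. cnj (if j = i then 1 else 0) * x j) = (\<lambda>j. if j = i then x i else 0)" by auto
  show ?thesis using i unfolding cinner_def eq by simp
qed

lemma cinner_unit_right: "i < n \<Longrightarrow> cinner n x (\<lambda>j. if j = i then 1 else 0) = cnj (x i)"
proof -
  assume i: "i < n"
  have eq: "(\<lambda>j. cnj (x j) * (if j = i then 1 else 0)) = (\<lambda>j. if j = i then cnj (x i) else 0)" by auto
  show ?thesis using i unfolding cinner_def eq by simp
qed

lemma bessel:
  assumes A: "finite A" and ort: "\<And>a b. a \<in> A \<Longrightarrow> b \<in> A \<Longrightarrow> cinner n (u a) (u b) = (if a = b then 1 else 0)"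
    and i: "i < n"
  shows "(\<Sum>a\<in>A. (cmod (u a i))\<^sup>2) \<le> 1"
proof -
  define w where "w = (\<lambda>j. (if j = i then 1 else 0) - (\<Sum>a\<in>A. cnj (u a i) * u a j))"
  have h1: "cinner n (u b) w = 0" if b: "b \<in> A" for b
  proof -
    have "cinner n (u b) w = cnj (u b i) - (\<Sum>a\<in>A. cnj (u a i) * cinner n (u b) (u a))"
      unfolding w_def by (simp add: cinner_diff_right cinner_unit_right[OF i] cinner_sum_right)
    also have "(\<Sum>a\<in>A. cnj (u a i) * cinner n (u b) (u a)) = (\<Sum>a\<in>A. if b = a then cnj (u a i) else 0)"
      using b by (intro sum.cong refl) (simp add: ort)
    also have "\<dots> = cnj (u b i)" using A b by simp
    finally show ?thesis by simp
  qed
  have "cinner n w w = w i - (\<Sum>a\<in>A. u a i * cinner n (u a) w)"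
    by (subst (1) w_def) (simp add: cinner_diff_left cinner_unit_left[OF i] cinner_sum_left)
  also have "(\<Sum>a\<in>A. u a i * cinner n (u a) w) = 0" using h1 by simp
  finally have "cinner n w w = 1 - (\<Sum>a\<in>A. cnj (u a i) * u a i)" by (simp add: w_def)
  moreover have "\<And>a. cnj (u a i) * u a i = complex_of_real ((cmod (u a i))\<^sup>2)"
    by (metis complex_norm_square mult.commute of_real_power)
  ultimately have "complex_of_real (nsq n w) = complex_of_real (1 - (\<Sum>a\<in>A. (cmod (u a i))\<^sup>2))"
    by (simp add: cinner_self)
  then have "nsq n w = 1 - (\<Sum>a\<in>A. (cmod (u a i))\<^sup>2)" using of_real_eq_iff by blast
  then show ?thesis using nsq_nonneg[of n w] by simp
qed

lemma card_eig_bound: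
  assumes L: "selfadj_on_ker n P L" and A: "finite A" "A \<subseteq> ker_eigenvalues n P L"
  shows "card A \<le> n"
proof -
  have ex: "\<exists>v. v \<in> kerP n P \<and> nsq n v = 1 \<and> cmv n L v = (\<lambda>i. complex_of_real a * v i)" if a: "a \<in> A" for a
  proof -
    obtain v where v: "v \<in> kerP n P" "v \<noteq> (\<lambda>_. 0)" "cmv n L v = (\<lambda>i. complex_of_real a * v i)"
      using A a unfolding ker_eigenvalues_def by blast
    define v' where "v' = (\<lambda>i. complex_of_real (1 / sqrt (nsq n v)) * v i)"
    have "v' \<in> Sph n P" using normalize_Sph[OF v(1) nsq_pos_kerP[OF v(1,2)]] v'_def by simp
    moreover have "cmv n L v' = (\<lambda>i. complex_of_real a * v' i)"
      unfolding v'_def cmv_scale v(3) by (simp add: mult_ac)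
    ultimately show ?thesis unfolding Sph_def by blast
  qed
  define u where "u = (\<lambda>a. SOME v. v \<in> kerP n P \<and> nsq n v = 1 \<and> cmv n L v = (\<lambda>i. complex_of_real a * v i))"
  have u: "u a \<in> kerP n P \<and> nsq n (u a) = 1 \<and> cmv n L (u a) = (\<lambda>i. complex_of_real a * u a i)" if "a \<in> A" for a
    unfolding u_def by (rule someI_ex[OF ex[OF that]])
  have ort: "cinner n (u a) (u b) = (if a = b then 1 else 0)" if "a \<in> A" "b \<in> A" for a b
  proof (cases "a = b")
    case True then show ?thesis using u[OF that(1)] by (simp add: cinner_self)
  next
    case False then show ?thesis using u[OF that(1)] u[OF that(2)] eig_ortho[OF L False] by simp
  qed
  have "real (card A) = (\<Sum>a\<in>A. nsq n (u a))" using u by simp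
  also have "\<dots> = (\<Sum>i<n. \<Sum>a\<in>A. (cmod (u a i))\<^sup>2)" unfolding nsq_def by (rule sum.swap)
  also have "\<dots> \<le> (\<Sum>i<n. 1)" by (intro sum_mono bessel[OF A(1) ort]) auto
  finally show ?thesis by simp
qed

lemma finite_eig:
  assumes L: "selfadj_on_ker n P L"
  shows "finite (ker_eigenvalues n P L)"
proof (rule ccontr)
  assume "infinite (ker_eigenvalues n P L)"
  then obtain A where "A \<subseteq> ker_eigenvalues n P L" "finite A" "card A = Suc n"
    using infinite_arbitrarily_large by blast
  then show False using card_eig_bound[OF L, of A] by simp
qed

lemma spectral:
  assumes P: "orth_proj n P" and L: "selfadj_on_ker n P L" and ne: "ker_eigenvalues n P L \<noteq> {}"
  shows "\<exists>vm. vm \<in> Sph n P \<and> cmv n L vm = (\<lambda>i. complex_of_real (Max (ker_eigenvalues n P L)) * vm i)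
              \<and> (\<forall>w\<in>kerP n P. ray n L w \<le> Max (ker_eigenvalues n P L) * nsq n w)"
proof -
  obtain R vm where vm: "vm \<in> Sph n P" "cmv n L vm = (\<lambda>i. complex_of_real R * vm i)"
     and b: "\<forall>w\<in>kerP n P. ray n L w \<le> R * nsq n w"
    using ray_max[OF P L ne] by blast
  have vm0: "vm \<noteq> (\<lambda>_. 0)" using vm(1) by (auto simp: Sph_def nsq_def)
  have "R \<in> ker_eigenvalues n P L" using vm vm0 unfolding ker_eigenvalues_def Sph_def by blast
  moreover have "\<mu> \<le> R" if mu: "\<mu> \<in> ker_eigenvalues n P L" for \<mu>
  proof -
    obtain v where v: "v \<in> kerP n P" "v \<noteq> (\<lambda>_. 0)" "cmv n L v = (\<lambda>i. complex_of_real \<mu> * v i)"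
      using mu unfolding ker_eigenvalues_def by blast
    have "ray n L v \<le> R * nsq n v" using b v(1) by blast
    then have "\<mu> * nsq n v \<le> R * nsq n v" using ray_eig[OF v(3)] by simp
    then show ?thesis using nsq_pos_kerP[OF v(1,2)] by simp
  qed
  ultimately have "Max (ker_eigenvalues n P L) = R"
    by (intro Max_eqI finite_eig[OF L]) auto
  then show ?thesis using vm b by auto
qed



lemma ode_sol:
  fixes f f' f'' :: "real \<Rightarrow> complex" and \<kappa> ell :: real
  assumes k: "\<kappa> > 0"
    and D: "\<And>x. x \<in> {0..ell} \<Longrightarrow> (f has_vector_derivative f' x) (at x within {0..ell})"
    and D2: "\<And>x. x \<in> {0..ell} \<Longrightarrow> (f' has_vector_derivative f'' x) (at x within {0..ell})"
    and eq: "\<And>x. x \<in> {0..ell} \<Longrightarrow> - f'' x = complex_of_real (- (\<kappa>\<^sup>2)) * f x"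
  shows "\<exists>A B. \<forall>x\<in>{0..ell}. f x = A * complex_of_real (exp (\<kappa> * x)) + B * complex_of_real (exp (- (\<kappa> * x)))
                  \<and> f' x = complex_of_real \<kappa> * (A * complex_of_real (exp (\<kappa> * x)) - B * complex_of_real (exp (- (\<kappa> * x))))"
proof -
  define k where "k = complex_of_real \<kappa>"
  have f2: "f'' x = k * k * f x" if "x \<in> {0..ell}" for x
    using eq[OF that] by (simp add: k_def power2_eq_square)
  have du: "((\<lambda>x. (f' x + k * f x) * complex_of_real (exp (- (\<kappa> * x)))) has_vector_derivative 0) (at x within {0..ell})"
    if x: "x \<in> {0..ell}" for x
  proof -
    have "((\<lambda>x. (f' x + k * f x) * complex_of_real (exp (- (\<kappa> * x)))) has_vector_derivative
      ((f' x + k * f x) * complex_of_real (exp (- (\<kappa> * x)) * (- \<kappa>)) + (f'' x + k * f' x) * complex_of_real (exp (- (\<kappa> * x))))) (at x within {0..ell})"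
      by (intro derivative_eq_intros D[OF x] D2[OF x] has_vector_derivative_of_real) (auto intro!: derivative_eq_intros D[OF x] D2[OF x])
    moreover have "(f' x + k * f x) * complex_of_real (exp (- (\<kappa> * x)) * (- \<kappa>)) + (f'' x + k * f' x) * complex_of_real (exp (- (\<kappa> * x))) = 0"
      using f2[OF x] by (simp add: k_def algebra_simps)
    ultimately show ?thesis by simp
  qed
  have dw: "((\<lambda>x. (f' x - k * f x) * complex_of_real (exp (\<kappa> * x))) has_vector_derivative 0) (at x within {0..ell})"
    if x: "x \<in> {0..ell}" for x
  proof -
    have "((\<lambda>x. (f' x - k * f x) * complex_of_real (exp (\<kappa> * x))) has_vector_derivative
      ((f' x - k * f x) * complex_of_real (exp (\<kappa> * x) * \<kappa>) + (f'' x - k * f' x) * complex_of_real (exp (\<kappa> * x)))) (at x within {0..ell})"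
      by (intro derivative_eq_intros D[OF x] D2[OF x] has_vector_derivative_of_real) (auto intro!: derivative_eq_intros D[OF x] D2[OF x])
    moreover have "(f' x - k * f x) * complex_of_real (exp (\<kappa> * x) * \<kappa>) + (f'' x - k * f' x) * complex_of_real (exp (\<kappa> * x)) = 0"
      using f2[OF x] by (simp add: k_def algebra_simps)
    ultimately show ?thesis by simp
  qed
  obtain U where U: "\<And>x. x \<in> {0..ell} \<Longrightarrow> (f' x + k * f x) * complex_of_real (exp (- (\<kappa> * x))) = U"
    using has_vector_derivative_zero_constant[of "{0..ell}", OF convex_real_interval(5) du] by blast
  obtain W where W: "\<And>x. x \<in> {0..ell} \<Longrightarrow> (f' x - k * f x) * complex_of_real (exp (\<kappa> * x)) = W"
    using has_vector_derivative_zero_constant[of "{0..ell}", OF convex_real_interval(5) dw] by blast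
  define A where "A = U / (2 * k)"
  define B where "B = - W / (2 * k)"
  have "f x = A * complex_of_real (exp (\<kappa> * x)) + B * complex_of_real (exp (- (\<kappa> * x)))
     \<and> f' x = complex_of_real \<kappa> * (A * complex_of_real (exp (\<kappa> * x)) - B * complex_of_real (exp (- (\<kappa> * x))))"
    if x: "x \<in> {0..ell}" for x
  proof -
    have e: "complex_of_real (exp (- (\<kappa> * x))) * complex_of_real (exp (\<kappa> * x)) = 1"
      by (simp flip: of_real_mult add: exp_minus)
    have u1: "f' x + k * f x = U * complex_of_real (exp (\<kappa> * x))"
      using U[OF x] e by (metis mult.assoc mult.right_neutral)
    have w1: "f' x - k * f x = W * complex_of_real (exp (- (\<kappa> * x)))"
      using W[OF x] e by (metis mult.assoc mult.commute mult.right_neutral)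
    have k0: "k \<noteq> 0" using k by (simp add: k_def)
    define e1 where "e1 = complex_of_real (exp (\<kappa> * x))"
    define e2 where "e2 = complex_of_real (exp (- (\<kappa> * x)))"
    have s1: "2 * k * f x = U * e1 - W * e2"
    proof -
      have "2 * k * f x = (f' x + k * f x) - (f' x - k * f x)" by (simp add: algebra_simps)
      then show ?thesis using u1 w1 e1_def e2_def by simp
    qed
    have s2: "2 * f' x = U * e1 + W * e2"
    proof -
      have "2 * f' x = (f' x + k * f x) + (f' x - k * f x)" by (simp add: algebra_simps)
      then show ?thesis using u1 w1 e1_def e2_def by simp
    qed
    have r1: "f x = A * e1 + B * e2"
    proof -
      have "f x = (2 * k * f x) / (2 * k)" using k0 by simp
      also have "\<dots> = A * e1 + B * e2" unfolding s1 A_def B_def using k0 by (simp add: field_simps)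
      finally show ?thesis .
    qed
    have r2: "f' x = k * (A * e1 - B * e2)"
    proof -
      have "f' x = (2 * f' x) / 2" by simp
      also have "\<dots> = k * (A * e1 - B * e2)" unfolding s2 A_def B_def using k0 by (simp add: field_simps)
      finally show ?thesis .
    qed
    show ?thesis using r1 r2 unfolding e1_def e2_def k_def by simp
  qed
  then show ?thesis by blast
qed



definition alpha :: "real \<Rightarrow> real \<Rightarrow> real" where
  "alpha k l = k * ((exp (k * l))\<^sup>2 + 1) / ((exp (k * l))\<^sup>2 - 1)"
definition beta :: "real \<Rightarrow> real \<Rightarrow> real" where
  "beta k l = 2 * k * exp (k * l) / ((exp (k * l))\<^sup>2 - 1)"

lemma bnd_alg:
  fixes k t A B :: complex
  assumes t0: "t \<noteq> 0" and t1: "t * t - 1 \<noteq> 0"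
  shows "k * (A - B) = - (k * (t * t + 1) / (t * t - 1)) * (A + B) + (2 * k * t / (t * t - 1)) * (A * t + B / t)"
    and "- (k * (A * t - B / t)) = (2 * k * t / (t * t - 1)) * (A + B) - (k * (t * t + 1) / (t * t - 1)) * (A * t + B / t)"
proof -
  define s where "s = 1 / (t * t - 1)"
  define u where "u = 1 / t"
  have s: "s * (t * t - 1) = 1" using t1 by (simp add: s_def)
  have u: "u * t = 1" using t0 by (simp add: u_def)
  have e1: "k * (t * t + 1) / (t * t - 1) = k * (t * t + 1) * s" by (simp add: s_def)
  have e2: "2 * k * t / (t * t - 1) = 2 * k * t * s" by (simp add: s_def)
  have e3: "B / t = B * u" by (simp add: u_def)
  show "k * (A - B) = - (k * (t * t + 1) / (t * t - 1)) * (A + B) + (2 * k * t / (t * t - 1)) * (A * t + B / t)"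
    unfolding e1 e2 e3 using s u by algebra
  show "- (k * (A * t - B / t)) = (2 * k * t / (t * t - 1)) * (A + B) - (k * (t * t + 1) / (t * t - 1)) * (A * t + B / t)"
    unfolding e1 e2 e3 using s u by algebra
qed

lemma bnd_zero:
  fixes t A B :: complex
  assumes t0: "t \<noteq> 0" and t1: "t * t - 1 \<noteq> 0" and "A + B = 0" "A * t + B / t = 0"
  shows "A = 0 \<and> B = 0"
proof -
  have B: "B = - A" using assms(3) by (metis add.commute eq_neg_iff_add_eq_0)
  then have "A * (t * t - 1) = 0" using assms(4) t0 by (simp add: field_simps)
  then have "A = 0" using t1 by simp
  then show ?thesis using B by simp
qed

lemma bnd:
  fixes A B :: complex
  assumes k: "\<kappa> > 0" and l: "ell > 0"
  shows "complex_of_real \<kappa> * (A - B) = - complex_of_real (alpha \<kappa> ell) * (A + B)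
          + complex_of_real (beta \<kappa> ell) * (A * complex_of_real (exp (\<kappa> * ell)) + B * complex_of_real (exp (- (\<kappa> * ell))))"
    and "- (complex_of_real \<kappa> * (A * complex_of_real (exp (\<kappa> * ell)) - B * complex_of_real (exp (- (\<kappa> * ell)))))
          = complex_of_real (beta \<kappa> ell) * (A + B)
          - complex_of_real (alpha \<kappa> ell) * (A * complex_of_real (exp (\<kappa> * ell)) + B * complex_of_real (exp (- (\<kappa> * ell))))"
    and "A + B = 0 \<Longrightarrow> A * complex_of_real (exp (\<kappa> * ell)) + B * complex_of_real (exp (- (\<kappa> * ell))) = 0 \<Longrightarrow> A = 0 \<and> B = 0"
proof -
  define T where "T = exp (\<kappa> * ell)"
  define t where "t = complex_of_real T"
  have T1: "T > 1" using k l by (simp add: T_def)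
  have t0: "t \<noteq> 0" using T1 by (simp add: t_def)
  have "T * T > 1" using T1 by (metis less_1_mult)
  then have t1: "t * t - 1 \<noteq> 0" unfolding t_def
    by (metis eq_iff_diff_eq_0 less_irrefl of_real_1 of_real_eq_iff of_real_mult)
  have em: "complex_of_real (exp (- (\<kappa> * ell))) = 1 / t"
    by (simp add: t_def T_def exp_minus of_real_inverse divide_inverse)
  have al: "complex_of_real (alpha \<kappa> ell) = complex_of_real \<kappa> * (t * t + 1) / (t * t - 1)"
    by (simp add: alpha_def t_def T_def power2_eq_square)
  have be: "complex_of_real (beta \<kappa> ell) = 2 * complex_of_real \<kappa> * t / (t * t - 1)"
    by (simp add: beta_def t_def T_def power2_eq_square)
  have et: "complex_of_real (exp (\<kappa> * ell)) = t" by (simp add: t_def T_def)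
  show "complex_of_real \<kappa> * (A - B) = - complex_of_real (alpha \<kappa> ell) * (A + B)
          + complex_of_real (beta \<kappa> ell) * (A * complex_of_real (exp (\<kappa> * ell)) + B * complex_of_real (exp (- (\<kappa> * ell))))"
    unfolding em al be et using bnd_alg(1)[OF t0 t1, of "complex_of_real \<kappa>" A B] by (simp add: divide_inverse)
  show "- (complex_of_real \<kappa> * (A * complex_of_real (exp (\<kappa> * ell)) - B * complex_of_real (exp (- (\<kappa> * ell)))))
          = complex_of_real (beta \<kappa> ell) * (A + B)
          - complex_of_real (alpha \<kappa> ell) * (A * complex_of_real (exp (\<kappa> * ell)) + B * complex_of_real (exp (- (\<kappa> * ell))))"
    unfolding em al be et using bnd_alg(2)[OF t0 t1, of "complex_of_real \<kappa>" A B] by (simp add: divide_inverse)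
  show "A + B = 0 \<Longrightarrow> A * complex_of_real (exp (\<kappa> * ell)) + B * complex_of_real (exp (- (\<kappa> * ell))) = 0 \<Longrightarrow> A = 0 \<and> B = 0"
    unfolding em et using bnd_zero[OF t0 t1, of A B] by (simp add: divide_inverse)
qed



definition Nm :: "nat \<Rightarrow> real \<Rightarrow> (nat \<Rightarrow> real) \<Rightarrow> (nat \<Rightarrow> complex) \<Rightarrow> nat \<Rightarrow> complex" where
  "Nm E \<kappa> ell v = (\<lambda>i. if i < E then - complex_of_real (alpha \<kappa> (ell i)) * v i + complex_of_real (beta \<kappa> (ell i)) * v (i + E)
      else if i < 2 * E then complex_of_real (beta \<kappa> (ell (i - E))) * v (i - E) - complex_of_real (alpha \<kappa> (ell (i - E))) * v i
      else 0)"

lemma choice2: "(\<forall>e<E. \<exists>a b. Q e a b) \<Longrightarrow> \<exists>A B. \<forall>e<E. Q e (A e) (B e)"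
proof -
  assume h: "\<forall>e<E. \<exists>a b. Q e a b"
  define A where "A = (\<lambda>e. SOME a. \<exists>b. Q e a b)"
  define B where "B = (\<lambda>e. SOME b. Q e (A e) b)"
  have "\<forall>e<E. Q e (A e) (B e)"
  proof (intro allI impI)
    fix e assume "e < E"
    then have "\<exists>a b. Q e a b" using h by blast
    then have "\<exists>b. Q e (A e) b" unfolding A_def by (rule someI_ex)
    then show "Q e (A e) (B e)" unfolding B_def by (rule someI_ex)
  qed
  then show ?thesis by blast
qed

lemma eig_to_vec:
  assumes k: "\<kappa> > 0" and l: "\<forall>e<E. ell e > 0"
    and ev: "laplacian_eigenvalue E ell P L (- (\<kappa>\<^sup>2))"
  shows "\<exists>v\<in>kerP (2 * E) P. v \<noteq> (\<lambda>_. 0) \<and>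
           (\<forall>i. Nm E \<kappa> ell v i - cmv (2 * E) P (Nm E \<kappa> ell v) i + cmv (2 * E) L v i = 0)"
proof -
  obtain F F' F'' where
    ode: "\<forall>e<E. \<forall>x\<in>{0..ell e}.
         (F e has_vector_derivative F' e x) (at x within {0..ell e}) \<and>
         (F' e has_vector_derivative F'' e x) (at x within {0..ell e}) \<and>
         - F'' e x = complex_of_real (- (\<kappa>\<^sup>2)) * F e x"
    and nz: "\<exists>e<E. \<exists>x\<in>{0..ell e}. F e x \<noteq> 0"
    and Pz: "cmv (2 * E) P (bv E ell F) = (\<lambda>_. 0)"
    and bc: "(\<lambda>i. (dbv E ell F' i - cmv (2 * E) P (dbv E ell F') i)
              + cmv (2 * E) L (\<lambda>i. bv E ell F i - cmv (2 * E) P (bv E ell F) i) i) = (\<lambda>_. 0)"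
    using ev unfolding laplacian_eigenvalue_def Let_def by blast
  have "\<forall>e<E. \<exists>A B. \<forall>x\<in>{0..ell e}. F e x = A * complex_of_real (exp (\<kappa> * x)) + B * complex_of_real (exp (- (\<kappa> * x)))
                  \<and> F' e x = complex_of_real \<kappa> * (A * complex_of_real (exp (\<kappa> * x)) - B * complex_of_real (exp (- (\<kappa> * x))))"
  proof (intro allI impI)
    fix e assume e: "e < E"
    show "\<exists>A B. \<forall>x\<in>{0..ell e}. F e x = A * complex_of_real (exp (\<kappa> * x)) + B * complex_of_real (exp (- (\<kappa> * x)))
                  \<and> F' e x = complex_of_real \<kappa> * (A * complex_of_real (exp (\<kappa> * x)) - B * complex_of_real (exp (- (\<kappa> * x))))"
      by (rule ode_sol[OF k, of "ell e" "F e" "F' e" "F'' e"]) (use ode e in blast)+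
  qed
  then obtain A B where AB: "\<forall>e<E. \<forall>x\<in>{0..ell e}. F e x = A e * complex_of_real (exp (\<kappa> * x)) + B e * complex_of_real (exp (- (\<kappa> * x)))
                  \<and> F' e x = complex_of_real \<kappa> * (A e * complex_of_real (exp (\<kappa> * x)) - B e * complex_of_real (exp (- (\<kappa> * x))))"
    using choice2[where Q="\<lambda>e A B. \<forall>x\<in>{0..ell e}. F e x = A * complex_of_real (exp (\<kappa> * x)) + B * complex_of_real (exp (- (\<kappa> * x)))
                  \<and> F' e x = complex_of_real \<kappa> * (A * complex_of_real (exp (\<kappa> * x)) - B * complex_of_real (exp (- (\<kappa> * x))))"] by blast
  define v where "v = bv E ell F"
  have AB0: "F e 0 = A e + B e" "F' e 0 = complex_of_real \<kappa> * (A e - B e)" if "e < E" for e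
  proof -
    have "0 \<in> {0..ell e}" using l that by (simp add: less_imp_le)
    then have "F e 0 = A e * complex_of_real (exp (\<kappa> * 0)) + B e * complex_of_real (exp (- (\<kappa> * 0)))
                  \<and> F' e 0 = complex_of_real \<kappa> * (A e * complex_of_real (exp (\<kappa> * 0)) - B e * complex_of_real (exp (- (\<kappa> * 0))))"
      using AB that by blast
    then show "F e 0 = A e + B e" "F' e 0 = complex_of_real \<kappa> * (A e - B e)" by simp_all
  qed
  have ABl: "F e (ell e) = A e * complex_of_real (exp (\<kappa> * ell e)) + B e * complex_of_real (exp (- (\<kappa> * ell e)))"
      "F' e (ell e) = complex_of_real \<kappa> * (A e * complex_of_real (exp (\<kappa> * ell e)) - B e * complex_of_real (exp (- (\<kappa> * ell e))))"
    if "e < E" for e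
  proof -
    have "ell e \<in> {0..ell e}" using l that by (simp add: less_imp_le)
    then show "F e (ell e) = A e * complex_of_real (exp (\<kappa> * ell e)) + B e * complex_of_real (exp (- (\<kappa> * ell e)))"
      "F' e (ell e) = complex_of_real \<kappa> * (A e * complex_of_real (exp (\<kappa> * ell e)) - B e * complex_of_real (exp (- (\<kappa> * ell e))))"
      using AB that by blast+
  qed
  have dN: "dbv E ell F' = Nm E \<kappa> ell v"
  proof
    fix i
    show "dbv E ell F' i = Nm E \<kappa> ell v i"
    proof (cases "i < E")
      case True
      then show ?thesis using bnd(1)[OF k l[rule_format, OF True], of "A i" "B i"] AB0[OF True] ABl[OF True]
        by (simp add: dbv_def Nm_def v_def bv_def)
    next
      case False
      show ?thesis
      proof (cases "i < 2 * E")
        case True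
        define e where "e = i - E"
        have e: "e < E" "i = e + E" using False True e_def by auto
        then show ?thesis using bnd(2)[OF k l[rule_format, OF e(1)], of "A e" "B e"] AB0[OF e(1)] ABl[OF e(1)] False True
          by (simp add: dbv_def Nm_def v_def bv_def)
      qed (use False in \<open>simp add: dbv_def Nm_def\<close>)
    qed
  qed
  have vk: "v \<in> kerP (2 * E) P" using Pz unfolding kerP_def v_def by (simp add: bv_def)
  have v0: "v \<noteq> (\<lambda>_. 0)"
  proof
    assume v0: "v = (\<lambda>_. 0)"
    obtain e x where ex: "e < E" "x \<in> {0..ell e}" "F e x \<noteq> 0" using nz by blast
    have "v e = 0" "v (e + E) = 0" using v0 by auto
    then have "F e 0 = 0" "F e (ell e) = 0" using ex(1) by (auto simp: v_def bv_def)
    then have "A e = 0 \<and> B e = 0" using bnd(3)[OF k l[rule_format, OF ex(1)], of "A e" "B e"] AB0[OF ex(1)] ABl[OF ex(1)]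
      by simp
    moreover have "F e x = A e * complex_of_real (exp (\<kappa> * x)) + B e * complex_of_real (exp (- (\<kappa> * x)))"
      using AB ex(1,2) by blast
    ultimately show False using ex(3) by simp
  qed
  have eqv: "(\<lambda>i. bv E ell F i - cmv (2 * E) P (bv E ell F) i) = v" using Pz v_def by simp
  have "(\<lambda>i. (Nm E \<kappa> ell v i - cmv (2 * E) P (Nm E \<kappa> ell v) i) + cmv (2 * E) L v i) = (\<lambda>_. 0)"
    using bc unfolding eqv dN .
  then have "\<forall>i. Nm E \<kappa> ell v i - cmv (2 * E) P (Nm E \<kappa> ell v) i + cmv (2 * E) L v i = 0"
    unfolding fun_eq_iff by blast
  then show ?thesis using vk v0 by blast
qed



lemma vec_to_eig:
  assumes k: "\<kappa> > 0" and l: "\<forall>e<E. ell e > 0" and vk: "v \<in> kerP (2 * E) P" and v0: "v \<noteq> (\<lambda>_. 0)"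
    and cond: "\<forall>i. Nm E \<kappa> ell v i - cmv (2 * E) P (Nm E \<kappa> ell v) i + cmv (2 * E) L v i = 0"
  shows "laplacian_eigenvalue E ell P L (- (\<kappa>\<^sup>2))"
proof -
  define e1 where "e1 = (\<lambda>e. complex_of_real (exp (\<kappa> * ell e)))"
  define e2 where "e2 = (\<lambda>e. complex_of_real (exp (- (\<kappa> * ell e))))"
  define A where "A = (\<lambda>e. (v (e + E) - v e * e2 e) / (e1 e - e2 e))"
  define B where "B = (\<lambda>e. v e - A e)"
  define F where "F = (\<lambda>e x. A e * complex_of_real (exp (\<kappa> * x)) + B e * complex_of_real (exp (- (\<kappa> * x))))"
  define F' where "F' = (\<lambda>e x. complex_of_real \<kappa> * (A e * complex_of_real (exp (\<kappa> * x)) - B e * complex_of_real (exp (- (\<kappa> * x)))))"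
  define F'' where "F'' = (\<lambda>e x. complex_of_real (\<kappa>\<^sup>2) * (A e * complex_of_real (exp (\<kappa> * x)) + B e * complex_of_real (exp (- (\<kappa> * x)))))"
  have e12: "e1 e - e2 e \<noteq> 0" if "e < E" for e
  proof -
    have "\<kappa> * ell e > 0" using k l that by simp
    then have "exp (- (\<kappa> * ell e)) < exp (\<kappa> * ell e)" by simp
    then show ?thesis unfolding e1_def e2_def
      by (metis eq_iff_diff_eq_0 less_irrefl of_real_eq_iff)
  qed
  have F0: "F e 0 = v e" for e by (simp add: F_def B_def)
  have Fl: "F e (ell e) = v (e + E)" if "e < E" for e
  proof -
    have "F e (ell e) = A e * (e1 e - e2 e) + v e * e2 e"
      by (simp add: F_def B_def e1_def e2_def algebra_simps)
    also have "\<dots> = v (e + E)" using e12[OF that] by (simp add: A_def)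
    finally show ?thesis .
  qed
  have bvv: "bv E ell F = v"
  proof
    fix i
    show "bv E ell F i = v i"
    proof (cases "i < E")
      case True then show ?thesis by (simp add: bv_def F0)
    next
      case False
      show ?thesis
      proof (cases "i < 2 * E")
        case True
        then have "i - E < E" "i - E + E = i" using False by auto
        then show ?thesis using False True Fl[of "i - E"] by (simp add: bv_def)
      next
        case False2: False
        then show ?thesis using False vk by (simp add: bv_def kerP_def)
      qed
    qed
  qed
  have dN: "dbv E ell F' = Nm E \<kappa> ell v"
  proof
    fix i
    show "dbv E ell F' i = Nm E \<kappa> ell v i"
    proof (cases "i < E")
      case True
      have "F' i 0 = complex_of_real \<kappa> * (A i - B i)" by (simp add: F'_def)
      also have "\<dots> = - complex_of_real (alpha \<kappa> (ell i)) * (A i + B i)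
          + complex_of_real (beta \<kappa> (ell i)) * (A i * e1 i + B i * e2 i)"
        unfolding e1_def e2_def by (rule bnd(1)[OF k l[rule_format, OF True]])
      also have "A i + B i = v i" by (simp add: B_def)
      also have "A i * e1 i + B i * e2 i = v (i + E)" using Fl[OF True] by (simp add: F_def e1_def e2_def)
      finally show ?thesis using True by (simp add: dbv_def Nm_def)
    next
      case False
      show ?thesis
      proof (cases "i < 2 * E")
        case True
        define e where "e = i - E"
        have e: "e < E" "i = e + E" using False True e_def by auto
        have "- F' e (ell e) = - (complex_of_real \<kappa> * (A e * e1 e - B e * e2 e))" by (simp add: F'_def e1_def e2_def)
        also have "\<dots> = complex_of_real (beta \<kappa> (ell e)) * (A e + B e)
          - complex_of_real (alpha \<kappa> (ell e)) * (A e * e1 e + B e * e2 e)"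
          unfolding e1_def e2_def by (rule bnd(2)[OF k l[rule_format, OF e(1)]])
        also have "A e + B e = v e" by (simp add: B_def)
        also have "A e * e1 e + B e * e2 e = v (e + E)" using Fl[OF e(1)] by (simp add: F_def e1_def e2_def)
        finally show ?thesis using e by (simp add: dbv_def Nm_def)
      next
        case False2: False
        then show ?thesis using False by (simp add: dbv_def Nm_def)
      qed
    qed
  qed
  have ode: "\<forall>e<E. \<forall>x\<in>{0..ell e}.
         (F e has_vector_derivative F' e x) (at x within {0..ell e}) \<and>
         (F' e has_vector_derivative F'' e x) (at x within {0..ell e}) \<and>
         - F'' e x = complex_of_real (- (\<kappa>\<^sup>2)) * F e x"
  proof (intro allI impI ballI conjI)
    fix e x
    show "(F e has_vector_derivative F' e x) (at x within {0..ell e})"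
      unfolding F_def F'_def
      by (auto intro!: derivative_eq_intros simp: algebra_simps)
    show "(F' e has_vector_derivative F'' e x) (at x within {0..ell e})"
      unfolding F'_def F''_def
      by (auto intro!: derivative_eq_intros simp: algebra_simps power2_eq_square)
    show "- F'' e x = complex_of_real (- (\<kappa>\<^sup>2)) * F e x"
      by (simp add: F''_def F_def)
  qed
  have nz: "\<exists>e<E. \<exists>x\<in>{0..ell e}. F e x \<noteq> 0"
  proof -
    obtain i where i: "v i \<noteq> 0" using v0 by auto
    then have i2: "i < 2 * E" using vk by (metis kerP_out not_less)
    show ?thesis
    proof (cases "i < E")
      case True
      then show ?thesis using i F0[of i] l by (intro exI[of _ i]) (auto intro!: bexI[of _ 0] simp: less_imp_le)
    next
      case False
      then have e: "i - E < E" "i - E + E = i" using i2 by auto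
      then show ?thesis using i Fl[OF e(1)] l by (intro exI[of _ "i - E"]) (auto intro!: bexI[of _ "ell (i - E)"] simp: less_imp_le)
    qed
  qed
  have Pz: "cmv (2 * E) P (bv E ell F) = (\<lambda>_. 0)" using vk bvv by (simp add: kerP_def)
  have eqv: "(\<lambda>i. bv E ell F i - cmv (2 * E) P (bv E ell F) i) = v" using Pz bvv by simp
  have bc: "(\<lambda>i. (dbv E ell F' i - cmv (2 * E) P (dbv E ell F') i)
              + cmv (2 * E) L (\<lambda>i. bv E ell F i - cmv (2 * E) P (bv E ell F) i) i) = (\<lambda>_. 0)"
    unfolding eqv dN using cond by (simp add: fun_eq_iff)
  show ?thesis unfolding laplacian_eigenvalue_def Let_def
    using ode nz Pz bc by blast
qed



lemma sum_split2: "(\<Sum>i<2 * (E::nat). g i) = (\<Sum>e<E. g e + g (e + E))"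
proof -
  have u: "{..<2 * E} = {..<E} \<union> {E..<E + E}" by auto
  have "(\<Sum>i<2 * E. g i) = (\<Sum>i<E. g i) + (\<Sum>i\<in>{E..<E + E}. g i)"
    unfolding u by (rule sum.union_disjoint) auto
  then have "(\<Sum>i<2 * E. g i) = (\<Sum>i<E. g i) + (\<Sum>i\<in>{0 + E..<E + E}. g i)" by simp
  also have "(\<Sum>i\<in>{0 + E..<E + E}. g i) = (\<Sum>i\<in>{0..<E}. g (i + E))"
    by (rule sum.shift_bounds_nat_ivl)
  finally show ?thesis by (simp add: sum.distrib lessThan_atLeast0)
qed

lemma nsq_split: "nsq (2 * E) v = (\<Sum>e<E. (cmod (v e))\<^sup>2 + (cmod (v (e + E)))\<^sup>2)"
  unfolding nsq_def by (rule sum_split2)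

lemma cinner_Nm: "cinner (2 * E) u (Nm E \<kappa> ell v) =
   (\<Sum>e<E. cnj (u e) * (- complex_of_real (alpha \<kappa> (ell e)) * v e + complex_of_real (beta \<kappa> (ell e)) * v (e + E))
        + cnj (u (e + E)) * (complex_of_real (beta \<kappa> (ell e)) * v e - complex_of_real (alpha \<kappa> (ell e)) * v (e + E)))"
  unfolding cinner_def sum_split2 by (intro sum.cong refl) (simp add: Nm_def)

lemma Nm_sym: "cinner (2 * E) u (Nm E \<kappa> ell v) = cinner (2 * E) (Nm E \<kappa> ell u) v"
proof -
  have "cinner (2 * E) (Nm E \<kappa> ell u) v = cnj (cinner (2 * E) v (Nm E \<kappa> ell u))"
    by (simp add: cinner_cnj)
  also have "\<dots> = cinner (2 * E) u (Nm E \<kappa> ell v)"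
    unfolding cinner_Nm cnj_sum by (intro sum.cong refl) (simp add: algebra_simps)
  finally show ?thesis by simp
qed

lemma Nm_lin: "Nm E \<kappa> ell (\<lambda>i. v i + c * w i) = (\<lambda>i. Nm E \<kappa> ell v i + c * Nm E \<kappa> ell w i)"
  by (auto simp: Nm_def algebra_simps fun_eq_iff)

lemma Nm_out: "2 * E \<le> i \<Longrightarrow> Nm E \<kappa> ell v i = 0"
  by (simp add: Nm_def)

lemma re_cross: "2 * Re (cnj a * b) \<le> (cmod a)\<^sup>2 + (cmod b)\<^sup>2"
  and re_cross': "- ((cmod a)\<^sup>2 + (cmod b)\<^sup>2) \<le> 2 * Re (cnj a * b)"
proof -
  have "0 \<le> (Re a - Re b)\<^sup>2 + (Im a - Im b)\<^sup>2" by simp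
  then show "2 * Re (cnj a * b) \<le> (cmod a)\<^sup>2 + (cmod b)\<^sup>2"
    unfolding cmod_power2 by (simp add: power2_diff algebra_simps)
  have "0 \<le> (Re a + Re b)\<^sup>2 + (Im a + Im b)\<^sup>2" by simp
  then show "- ((cmod a)\<^sup>2 + (cmod b)\<^sup>2) \<le> 2 * Re (cnj a * b)"
    unfolding cmod_power2 by (simp add: power2_sum algebra_simps)
qed

lemma Re_cinner_Nm: "Re (cinner (2 * E) v (Nm E \<kappa> ell v)) =
   (\<Sum>e<E. - alpha \<kappa> (ell e) * ((cmod (v e))\<^sup>2 + (cmod (v (e + E)))\<^sup>2)
          + beta \<kappa> (ell e) * (2 * Re (cnj (v e) * v (e + E))))"
proof -
  have c: "Re (cnj z * z) = (cmod z)\<^sup>2" for z unfolding cmod_power2 by (simp add: power2_eq_square)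
  have d: "Re (cnj (v (e + E)) * v e) = Re (cnj (v e) * v (e + E))" for e
    by (simp add: algebra_simps)
  show ?thesis unfolding cinner_Nm Re_sum cmod_power2
    by (intro sum.cong refl) (simp add: algebra_simps power2_eq_square)
qed

lemma beta_nonneg: "\<kappa> > 0 \<Longrightarrow> ell > 0 \<Longrightarrow> beta \<kappa> ell \<ge> 0"
proof -
  assume "\<kappa> > 0" "ell > 0"
  then have "exp (\<kappa> * ell) > 1" by simp
  then have "(exp (\<kappa> * ell))\<^sup>2 > 1" by (simp add: one_less_power)
  then show ?thesis using \<open>\<kappa> > 0\<close> by (simp add: beta_def)
qed

lemma alpha_minus_beta: "\<kappa> > 0 \<Longrightarrow> ell > 0 \<Longrightarrow>
   alpha \<kappa> ell - beta \<kappa> ell = \<kappa> * (exp (\<kappa> * ell) - 1) / (exp (\<kappa> * ell) + 1)"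
proof -
  assume "\<kappa> > 0" "ell > 0"
  then have T: "exp (\<kappa> * ell) > 1" by simp
  define T where "T = exp (\<kappa> * ell)"
  have T1: "T > 1" using T T_def by simp
  have "T\<^sup>2 - 1 = (T - 1) * (T + 1)" by (simp add: power2_eq_square algebra_simps)
  moreover have "T\<^sup>2 + 1 - 2 * T = (T - 1) * (T - 1)" by (simp add: power2_eq_square algebra_simps)
  ultimately have "\<kappa> * (T\<^sup>2 + 1) / (T\<^sup>2 - 1) - 2 * \<kappa> * T / (T\<^sup>2 - 1) = \<kappa> * (T - 1) / (T + 1)"
  proof -
    assume h1: "T\<^sup>2 - 1 = (T - 1) * (T + 1)" and h2: "T\<^sup>2 + 1 - 2 * T = (T - 1) * (T - 1)"
    have "\<kappa> * (T\<^sup>2 + 1) / (T\<^sup>2 - 1) - 2 * \<kappa> * T / (T\<^sup>2 - 1) = \<kappa> * (T\<^sup>2 + 1 - 2 * T) / (T\<^sup>2 - 1)"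
      by (simp add: diff_divide_distrib algebra_simps)
    also have "\<dots> = (\<kappa> * (T - 1)) * (T - 1) / ((T + 1) * (T - 1))" unfolding h1 h2 by (simp add: mult_ac)
    also have "\<dots> = \<kappa> * (T - 1) / (T + 1)" using T1 by (intro mult_divide_mult_cancel_right) simp
    finally show ?thesis .
  qed
  then show ?thesis unfolding alpha_def beta_def T_def .
qed

lemma alpha_plus_beta: "\<kappa> > 0 \<Longrightarrow> ell > 0 \<Longrightarrow>
   alpha \<kappa> ell + beta \<kappa> ell = \<kappa> * (exp (\<kappa> * ell) + 1) / (exp (\<kappa> * ell) - 1)"
proof -
  assume "\<kappa> > 0" "ell > 0"
  then have T: "exp (\<kappa> * ell) > 1" by simp
  define T where "T = exp (\<kappa> * ell)"
  have T1: "T > 1" using T T_def by simp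
  have "T\<^sup>2 - 1 = (T - 1) * (T + 1)" by (simp add: power2_eq_square algebra_simps)
  moreover have "T\<^sup>2 + 1 + 2 * T = (T + 1) * (T + 1)" by (simp add: power2_eq_square algebra_simps)
  ultimately have "\<kappa> * (T\<^sup>2 + 1) / (T\<^sup>2 - 1) + 2 * \<kappa> * T / (T\<^sup>2 - 1) = \<kappa> * (T + 1) / (T - 1)"
  proof -
    assume h1: "T\<^sup>2 - 1 = (T - 1) * (T + 1)" and h2: "T\<^sup>2 + 1 + 2 * T = (T + 1) * (T + 1)"
    have "\<kappa> * (T\<^sup>2 + 1) / (T\<^sup>2 - 1) + 2 * \<kappa> * T / (T\<^sup>2 - 1) = \<kappa> * (T\<^sup>2 + 1 + 2 * T) / (T\<^sup>2 - 1)"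
      by (simp add: add_divide_distrib algebra_simps)
    also have "\<dots> = (\<kappa> * (T + 1)) * (T + 1) / ((T - 1) * (T + 1))" unfolding h1 h2 by (simp add: mult_ac)
    also have "\<dots> = \<kappa> * (T + 1) / (T - 1)" using T1 by (intro mult_divide_mult_cancel_right) simp
    finally show ?thesis .
  qed
  then show ?thesis unfolding alpha_def beta_def T_def .
qed

lemma Nm_upper:
  assumes k: "\<kappa> > 0" and l: "\<forall>e<E. ell e > 0" and c: "\<forall>e<E. alpha \<kappa> (ell e) - beta \<kappa> (ell e) \<ge> c e"
  shows "Re (cinner (2 * E) v (Nm E \<kappa> ell v)) \<le> - (\<Sum>e<E. c e * ((cmod (v e))\<^sup>2 + (cmod (v (e + E)))\<^sup>2))"
proof -
  have "Re (cinner (2 * E) v (Nm E \<kappa> ell v)) \<le> (\<Sum>e<E. - c e * ((cmod (v e))\<^sup>2 + (cmod (v (e + E)))\<^sup>2))"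
    unfolding Re_cinner_Nm
  proof (intro sum_mono)
    fix e assume e: "e \<in> {..<E}"
    have b: "beta \<kappa> (ell e) \<ge> 0" using beta_nonneg k l e by simp
    have "beta \<kappa> (ell e) * (2 * Re (cnj (v e) * v (e + E))) \<le> beta \<kappa> (ell e) * ((cmod (v e))\<^sup>2 + (cmod (v (e + E)))\<^sup>2)"
      using b re_cross by (rule mult_left_mono[rotated])
    moreover have "c e * ((cmod (v e))\<^sup>2 + (cmod (v (e + E)))\<^sup>2) \<le> (alpha \<kappa> (ell e) - beta \<kappa> (ell e)) * ((cmod (v e))\<^sup>2 + (cmod (v (e + E)))\<^sup>2)"
      using c e by (intro mult_right_mono) auto
    ultimately show "- alpha \<kappa> (ell e) * ((cmod (v e))\<^sup>2 + (cmod (v (e + E)))\<^sup>2) + beta \<kappa> (ell e) * (2 * Re (cnj (v e) * v (e + E)))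
         \<le> - c e * ((cmod (v e))\<^sup>2 + (cmod (v (e + E)))\<^sup>2)"
      by (simp add: algebra_simps)
  qed
  then show ?thesis by (simp add: sum_negf)
qed

lemma Nm_lower:
  assumes k: "\<kappa> > 0" and l: "\<forall>e<E. ell e > 0" and d: "\<forall>e<E. alpha \<kappa> (ell e) + beta \<kappa> (ell e) \<le> d e"
  shows "Re (cinner (2 * E) v (Nm E \<kappa> ell v)) \<ge> - (\<Sum>e<E. d e * ((cmod (v e))\<^sup>2 + (cmod (v (e + E)))\<^sup>2))"
proof -
  have "Re (cinner (2 * E) v (Nm E \<kappa> ell v)) \<ge> (\<Sum>e<E. - d e * ((cmod (v e))\<^sup>2 + (cmod (v (e + E)))\<^sup>2))"
    unfolding Re_cinner_Nm
  proof (intro sum_mono)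
    fix e assume e: "e \<in> {..<E}"
    have b: "beta \<kappa> (ell e) \<ge> 0" using beta_nonneg k l e by simp
    have "beta \<kappa> (ell e) * (- ((cmod (v e))\<^sup>2 + (cmod (v (e + E)))\<^sup>2)) \<le> beta \<kappa> (ell e) * (2 * Re (cnj (v e) * v (e + E)))"
      using b re_cross' by (rule mult_left_mono[rotated])
    moreover have "(alpha \<kappa> (ell e) + beta \<kappa> (ell e)) * ((cmod (v e))\<^sup>2 + (cmod (v (e + E)))\<^sup>2) \<le> d e * ((cmod (v e))\<^sup>2 + (cmod (v (e + E)))\<^sup>2)"
      using d e by (intro mult_right_mono) auto
    ultimately show "- d e * ((cmod (v e))\<^sup>2 + (cmod (v (e + E)))\<^sup>2) \<le>
         - alpha \<kappa> (ell e) * ((cmod (v e))\<^sup>2 + (cmod (v (e + E)))\<^sup>2) + beta \<kappa> (ell e) * (2 * Re (cnj (v e) * v (e + E)))"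
      by (simp add: algebra_simps)
  qed
  then show ?thesis by (simp add: sum_negf)
qed



lemma Nm_scale: "Nm E \<kappa> ell (\<lambda>i. c * v i) = (\<lambda>i. c * Nm E \<kappa> ell v i)"
  by (auto simp: Nm_def algebra_simps fun_eq_iff)

lemma strict_sum_gt:
  fixes a w :: "nat \<Rightarrow> real"
  assumes "\<forall>e<E. a e > M" "\<forall>e<E. w e \<ge> 0" "(\<Sum>e<E. w e) > 0"
  shows "(\<Sum>e<E. a e * w e) > M * (\<Sum>e<E. w e)"
proof -
  obtain e0 where e0: "e0 < E" "w e0 > 0"
  proof (rule ccontr)
    assume "\<not> thesis"
    then have "\<forall>e<E. w e \<le> 0" using that by (meson not_le)
    then have "(\<Sum>e<E. w e) \<le> 0" by (intro sum_nonpos) auto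
    then show False using assms(3) by simp
  qed
  have "0 < (\<Sum>e<E. (a e - M) * w e)"
    using e0 assms by (intro sum_pos2[of "{..<E}" e0]) auto
  then show ?thesis by (simp add: algebra_simps sum_subtractf sum_distrib_left)
qed

lemma strict_sum_lt:
  fixes a w :: "nat \<Rightarrow> real"
  assumes "\<forall>e<E. a e < M" "\<forall>e<E. w e \<ge> 0" "(\<Sum>e<E. w e) > 0"
  shows "(\<Sum>e<E. a e * w e) < M * (\<Sum>e<E. w e)"
proof -
  have "(\<Sum>e<E. (- a e) * w e) > (- M) * (\<Sum>e<E. w e)"
    using assms by (intro strict_sum_gt) auto
  then show ?thesis by (simp add: sum_negf)
qed

lemma cont_alpha: "a > 0 \<Longrightarrow> ell > 0 \<Longrightarrow> continuous_on {a..b} (\<lambda>k. alpha k ell)"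
proof -
  assume a: "a > 0" and l: "ell > 0"
  have "(exp (k * ell))\<^sup>2 - 1 \<noteq> 0" if "k \<in> {a..b}" for k
  proof -
    have "exp (k * ell) > 1" using a l that by simp
    then have "(exp (k * ell))\<^sup>2 > 1" by (simp add: one_less_power)
    then show ?thesis by simp
  qed
  then show ?thesis unfolding alpha_def by (auto intro!: continuous_intros)
qed

lemma cont_beta: "a > 0 \<Longrightarrow> ell > 0 \<Longrightarrow> continuous_on {a..b} (\<lambda>k. beta k ell)"
proof -
  assume a: "a > 0" and l: "ell > 0"
  have "(exp (k * ell))\<^sup>2 - 1 \<noteq> 0" if "k \<in> {a..b}" for k
  proof -
    have "exp (k * ell) > 1" using a l that by simp
    then have "(exp (k * ell))\<^sup>2 > 1" by (simp add: one_less_power)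
    then show ?thesis by simp
  qed
  then show ?thesis unfolding beta_def by (auto intro!: continuous_intros)
qed

definition phi :: "nat \<Rightarrow> (nat \<Rightarrow> real) \<Rightarrow> (nat \<Rightarrow> nat \<Rightarrow> complex) \<Rightarrow> real \<times> (nat \<Rightarrow> complex) \<Rightarrow> real" where
  "phi E ell L p = ray (2 * E) L (snd p) + Re (cinner (2 * E) (snd p) (Nm E (fst p) ell (snd p)))"

lemma cont_phi:
  assumes a: "a > 0" and l: "\<forall>e<E. ell e > 0"
  shows "continuous_on ({a..b} \<times> S) (phi E ell L)"
proof -
  have ca: "continuous_on ({a..b} \<times> S) (\<lambda>p. alpha (fst p) (ell e))" if "e < E" for e
    by (rule continuous_on_compose2[OF cont_alpha[OF a l[rule_format, OF that]] continuous_on_fst]) auto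
  have cb: "continuous_on ({a..b} \<times> S) (\<lambda>p. beta (fst p) (ell e))" if "e < E" for e
    by (rule continuous_on_compose2[OF cont_beta[OF a l[rule_format, OF that]] continuous_on_fst]) auto
  have cr: "continuous_on ({a..b} \<times> S) (\<lambda>p. ray (2 * E) L (snd p))"
    by (rule continuous_on_compose2[OF cont_ray continuous_on_snd]) auto
  have eq: "phi E ell L = (\<lambda>p. ray (2 * E) L (snd p) + (\<Sum>e<E. - alpha (fst p) (ell e) * ((cmod (snd p e))\<^sup>2 + (cmod (snd p (e + E)))\<^sup>2)
          + beta (fst p) (ell e) * (2 * Re (cnj (snd p e) * snd p (e + E)))))"
    unfolding phi_def[abs_def] Re_cinner_Nm by simp
  have "continuous_on ({a..b} \<times> S) (\<lambda>p. ray (2 * E) L (snd p) + (\<Sum>e<E. - alpha (fst p) (ell e) * ((cmod (snd p e))\<^sup>2 + (cmod (snd p (e + E)))\<^sup>2)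
          + beta (fst p) (ell e) * (2 * Re (cnj (snd p e) * snd p (e + E)))))"
    by (intro continuous_intros cr ca cb) auto
  then show ?thesis unfolding eq .
qed



lemma phi_scale: "phi E ell L (\<kappa>, \<lambda>i. c * v i) = (cmod c)\<^sup>2 * phi E ell L (\<kappa>, v)"
proof -
  have "cinner (2 * E) (\<lambda>i. c * v i) (Nm E \<kappa> ell (\<lambda>i. c * v i)) = (cnj c * c) * cinner (2 * E) v (Nm E \<kappa> ell v)"
    by (simp add: Nm_scale cinner_scale_left cinner_scale_right)
  also have "cnj c * c = complex_of_real ((cmod c)\<^sup>2)"
    by (metis complex_norm_square mult.commute of_real_power)
  finally show ?thesis by (simp add: phi_def ray_scale algebra_simps)
qed

lemma key_fixed:
  assumes l: "\<forall>e<E. ell e > 0" and P: "orth_proj (2 * E) P" and Ls: "selfadj_on_ker (2 * E) P L"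
    and vm: "vm \<in> Sph (2 * E) P" and Lvm: "cmv (2 * E) L vm = (\<lambda>i. complex_of_real M * vm i)"
    and rb: "\<forall>w\<in>kerP (2 * E) P. ray (2 * E) L w \<le> M * nsq (2 * E) w"
    and eps: "0 < \<epsilon>" "\<epsilon> < M"
    and H1: "\<forall>e<E. alpha (M - \<epsilon>) (ell e) + beta (M - \<epsilon>) (ell e) < M"
    and H2: "\<forall>\<kappa>\<ge>M + \<epsilon>. \<forall>e<E. alpha \<kappa> (ell e) - beta \<kappa> (ell e) > M"
  shows "\<exists>\<kappa>\<ge>M - \<epsilon>. laplacian_eigenvalue E ell P L (- (\<kappa>\<^sup>2))"
    and "\<forall>lam. laplacian_eigenvalue E ell P L lam \<longrightarrow> - ((M + \<epsilon>)\<^sup>2) \<le> lam"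
proof -
  define K where "K = (\<lambda>\<kappa> v. \<lambda>i. cmv (2 * E) L v i + (Nm E \<kappa> ell v i - cmv (2 * E) P (Nm E \<kappa> ell v) i))"
  define w where "w = (\<lambda>v e. (cmod (v e))\<^sup>2 + (cmod (v (e + E)))\<^sup>2)"
  have LV: "cmv (2 * E) L v \<in> kerP (2 * E) P" if "v \<in> kerP (2 * E) P" for v
    using Ls that unfolding selfadj_on_ker_def by blast
  have Lsym: "cinner (2 * E) (cmv (2 * E) L v) u = cinner (2 * E) v (cmv (2 * E) L u)"
    if "v \<in> kerP (2 * E) P" "u \<in> kerP (2 * E) P" for v u
    using Ls that unfolding selfadj_on_ker_def by blast
  have F1: "Re (cinner (2 * E) v (K \<kappa> v)) = phi E ell L (\<kappa>, v)" if v: "v \<in> kerP (2 * E) P" for v \<kappa>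
    unfolding K_def phi_def ray_def
    by (simp add: cinner_add_right kerP_cinner_Q[OF P v])
  have nsqw: "nsq (2 * E) v = (\<Sum>e<E. w v e)" for v unfolding w_def by (rule nsq_split)
  have F2: "phi E ell L (\<kappa>, v) < 0" if k: "\<kappa> \<ge> M + \<epsilon>" and v: "v \<in> kerP (2 * E) P" "nsq (2 * E) v > 0" for \<kappa> v
  proof -
    have kp: "\<kappa> > 0" using k eps by simp
    have "Re (cinner (2 * E) v (Nm E \<kappa> ell v)) \<le> - (\<Sum>e<E. (alpha \<kappa> (ell e) - beta \<kappa> (ell e)) * w v e)"
      unfolding w_def by (rule Nm_upper[OF kp l]) auto
    moreover have "(\<Sum>e<E. (alpha \<kappa> (ell e) - beta \<kappa> (ell e)) * w v e) > M * (\<Sum>e<E. w v e)"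
      using H2 k v(2) nsqw by (intro strict_sum_gt) (auto simp: w_def)
    moreover have "ray (2 * E) L v \<le> M * nsq (2 * E) v" using rb v by blast
    ultimately show ?thesis unfolding phi_def nsqw by simp
  qed
  show "\<forall>lam. laplacian_eigenvalue E ell P L lam \<longrightarrow> - ((M + \<epsilon>)\<^sup>2) \<le> lam"
  proof (intro allI impI)
    fix lam assume ev: "laplacian_eigenvalue E ell P L lam"
    show "- ((M + \<epsilon>)\<^sup>2) \<le> lam"
    proof (rule ccontr)
      assume "\<not> - ((M + \<epsilon>)\<^sup>2) \<le> lam"
      then have lt: "lam < - ((M + \<epsilon>)\<^sup>2)" by simp
      define \<kappa> where "\<kappa> = sqrt (- lam)"
      have "(M + \<epsilon>)\<^sup>2 < - lam" using lt by simp
      then have "sqrt ((M + \<epsilon>)\<^sup>2) < \<kappa>" unfolding \<kappa>_def by (rule real_sqrt_less_mono)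
      then have k: "\<kappa> > M + \<epsilon>" using eps by simp
      have "0 \<le> - lam" using lt by (smt (verit) zero_le_power2)
      then have lk: "lam = - (\<kappa>\<^sup>2)" unfolding \<kappa>_def by simp
      obtain v where v: "v \<in> kerP (2 * E) P" "v \<noteq> (\<lambda>_. 0)"
        and cond: "\<forall>i. Nm E \<kappa> ell v i - cmv (2 * E) P (Nm E \<kappa> ell v) i + cmv (2 * E) L v i = 0"
        using eig_to_vec[of \<kappa> E ell P L] k eps l ev lk by auto
      have "cinner (2 * E) v (K \<kappa> v) = cinner (2 * E) v (\<lambda>_. 0)"
        by (rule cinner_cong) (use cond in \<open>simp add: K_def algebra_simps\<close>)
      then have "phi E ell L (\<kappa>, v) = 0" using F1[OF v(1), of \<kappa>] by simp
      moreover have "phi E ell L (\<kappa>, v) < 0" using F2[of \<kappa> v] k v nsq_pos_kerP[OF v] by simp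
      ultimately show False by simp
    qed
  qed
  show "\<exists>\<kappa>\<ge>M - \<epsilon>. laplacian_eigenvalue E ell P L (- (\<kappa>\<^sup>2))"
  proof -
    define k1 where "k1 = M - \<epsilon>"
    define k2 where "k2 = M + \<epsilon>"
    have k1p: "k1 > 0" using eps k1_def by simp
    have k12: "k1 \<le> k2" using eps k1_def k2_def by simp
    define C where "C = {k1..k2} \<times> Sph (2 * E) P"
    have cC: "compact C" unfolding C_def by (intro compact_Times compact_Icc compact_Sph)
    have contC: "continuous_on C (phi E ell L)" unfolding C_def by (rule cont_phi[OF k1p l])
    define T0 where "T0 = C \<inter> phi E ell L -` {0..}"
    have clT0: "closed T0" unfolding T0_def
      by (rule continuous_closed_preimage[OF contC compact_imp_closed[OF cC]]) simp
    have cT0: "compact T0"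
    proof -
      have "compact (C \<inter> T0)" by (rule compact_Int_closed[OF cC clT0])
      moreover have "C \<inter> T0 = T0" unfolding T0_def by auto
      ultimately show ?thesis by simp
    qed
    have vmk: "vm \<in> kerP (2 * E) P" "nsq (2 * E) vm = 1" using vm by (auto simp: Sph_def)
    have "phi E ell L (k1, vm) > 0"
    proof -
      have "Re (cinner (2 * E) vm (Nm E k1 ell vm)) \<ge> - (\<Sum>e<E. (alpha k1 (ell e) + beta k1 (ell e)) * w vm e)"
        unfolding w_def by (rule Nm_lower[OF k1p l]) auto
      moreover have "(\<Sum>e<E. (alpha k1 (ell e) + beta k1 (ell e)) * w vm e) < M * (\<Sum>e<E. w vm e)"
        using H1 vmk(2) nsqw[of vm] unfolding k1_def by (intro strict_sum_lt) (auto simp: w_def)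
      moreover have "ray (2 * E) L vm = M" using ray_eig[OF Lvm] vmk by simp
      ultimately show ?thesis using vmk(2) nsqw[of vm] unfolding phi_def by simp
    qed
    then have inT0: "(k1, vm) \<in> T0" unfolding T0_def C_def using k12 vm by simp
    then have T0ne: "T0 \<noteq> {}" by blast
    obtain p where p: "p \<in> T0" and pmax: "\<And>q. q \<in> T0 \<Longrightarrow> fst q \<le> fst p"
      using continuous_attains_sup[OF cT0 T0ne continuous_on_fst[OF continuous_on_id]] by blast
    define ks where "ks = fst p"
    define vs where "vs = snd p"
    have pp: "p = (ks, vs)" by (simp add: ks_def vs_def)
    have ks: "k1 \<le> ks" "ks \<le> k2" and vsS: "vs \<in> Sph (2 * E) P" and ph0: "phi E ell L (ks, vs) \<ge> 0"
      using p unfolding T0_def C_def pp by auto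
    have vsk: "vs \<in> kerP (2 * E) P" "nsq (2 * E) vs = 1" using vsS by (auto simp: Sph_def)
    have negS: "phi E ell L (ks, u) \<le> 0" if u: "u \<in> Sph (2 * E) P" for u
    proof (rule ccontr)
      assume "\<not> phi E ell L (ks, u) \<le> 0"
      then have gpos: "phi E ell L (ks, u) > 0" by simp
      have uk: "u \<in> kerP (2 * E) P" "nsq (2 * E) u = 1" using u by (auto simp: Sph_def)
      have gneg: "phi E ell L (k2, u) < 0" using F2[of k2 u] uk k2_def by simp
      have cg: "continuous_on {ks..k2} (\<lambda>\<kappa>. phi E ell L (\<kappa>, u))"
        by (rule continuous_on_compose2[OF contC, of _ "\<lambda>\<kappa>. (\<kappa>, u)"])
           (use ks u in \<open>auto intro!: continuous_intros simp: C_def\<close>)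
      obtain k' where k': "ks \<le> k'" "k' \<le> k2" "phi E ell L (k', u) = 0"
        using IVT2'[of "\<lambda>\<kappa>. phi E ell L (\<kappa>, u)" k2 0 ks, OF _ _ ks(2) cg] gneg gpos by auto
      have "(k', u) \<in> T0" unfolding T0_def C_def using k' ks u by auto
      then have "k' \<le> ks" using pmax[of "(k', u)"] ks_def by simp
      then have "k' = ks" using k' by simp
      then show False using k'(3) gpos by simp
    qed
    have phi0: "phi E ell L (ks, vs) = 0" using negS[OF vsS] ph0 by simp
    have ksp: "ks > 0" using ks k1p by simp
    have "\<forall>i<2 * E. K ks vs i = 0"
    proof (rule variational[where V="kerP (2 * E) P" and K="K ks" and v=vs])
      show "\<And>v w. v \<in> kerP (2 * E) P \<Longrightarrow> w \<in> kerP (2 * E) P \<Longrightarrow> (\<lambda>i. v i + w i) \<in> kerP (2 * E) P" by (rule kerP_add)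
      show "\<And>v c. v \<in> kerP (2 * E) P \<Longrightarrow> (\<lambda>i. c * v i) \<in> kerP (2 * E) P" by (rule kerP_scale)
      show "\<And>v. v \<in> kerP (2 * E) P \<Longrightarrow> K ks v \<in> kerP (2 * E) P"
        unfolding K_def by (intro kerP_add LV Q_in_kerP[OF P] Nm_out) auto
      show "\<And>v w c. v \<in> kerP (2 * E) P \<Longrightarrow> w \<in> kerP (2 * E) P \<Longrightarrow> K ks (\<lambda>i. v i + c * w i) = (\<lambda>i. K ks v i + c * K ks w i)"
        unfolding K_def by (simp add: cmv_add cmv_scale Nm_lin algebra_simps)
      show "\<And>v u. v \<in> kerP (2 * E) P \<Longrightarrow> u \<in> kerP (2 * E) P \<Longrightarrow> cinner (2 * E) v (K ks u) = cinner (2 * E) (K ks v) u"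
      proof -
        fix v u assume v: "v \<in> kerP (2 * E) P" and u: "u \<in> kerP (2 * E) P"
        have a: "cinner (2 * E) v (K ks u) = cinner (2 * E) v (cmv (2 * E) L u) + cinner (2 * E) v (Nm E ks ell u)"
          unfolding K_def by (simp add: cinner_add_right kerP_cinner_Q[OF P v])
        have "cinner (2 * E) (\<lambda>i. Nm E ks ell v i - cmv (2 * E) P (Nm E ks ell v) i) u
            = cnj (cinner (2 * E) u (\<lambda>i. Nm E ks ell v i - cmv (2 * E) P (Nm E ks ell v) i))"
          by (simp add: cinner_cnj)
        also have "\<dots> = cnj (cinner (2 * E) u (Nm E ks ell v))" by (simp add: kerP_cinner_Q[OF P u])
        also have "\<dots> = cinner (2 * E) (Nm E ks ell v) u" by (simp add: cinner_cnj)
        finally have b: "cinner (2 * E) (K ks v) u = cinner (2 * E) (cmv (2 * E) L v) u + cinner (2 * E) (Nm E ks ell v) u"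
          unfolding K_def by (simp add: cinner_add_left)
        show "cinner (2 * E) v (K ks u) = cinner (2 * E) (K ks v) u"
          unfolding a b by (simp add: Lsym[OF v u] Nm_sym)
      qed
      show "\<And>u. u \<in> kerP (2 * E) P \<Longrightarrow> Re (cinner (2 * E) u (K ks u)) \<le> 0"
      proof -
        fix u assume u: "u \<in> kerP (2 * E) P"
        show "Re (cinner (2 * E) u (K ks u)) \<le> 0"
        proof (cases "nsq (2 * E) u = 0")
          case True then show ?thesis by (simp add: nsq0_cinner)
        next
          case False
          then have Np: "nsq (2 * E) u > 0" using nsq_nonneg[of "2 * E" u] by simp
          have "phi E ell L (ks, \<lambda>i. complex_of_real (1 / sqrt (nsq (2 * E) u)) * u i) \<le> 0"
            by (rule negS[OF normalize_Sph[OF u Np]])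
          then have "phi E ell L (ks, u) / nsq (2 * E) u \<le> 0"
            using Np by (subst (asm) phi_scale) (simp add: power_divide norm_divide)
          then have "phi E ell L (ks, u) \<le> 0" using Np by (simp add: divide_le_0_iff)
          then show ?thesis using F1[OF u] by simp
        qed
      qed
      show "vs \<in> kerP (2 * E) P" by (rule vsk(1))
      show "Re (cinner (2 * E) vs (K ks vs)) = 0" using F1[OF vsk(1)] phi0 by simp
    qed
    then have cond: "\<forall>i. Nm E ks ell vs i - cmv (2 * E) P (Nm E ks ell vs) i + cmv (2 * E) L vs i = 0"
      unfolding K_def by (auto simp: algebra_simps not_less Nm_out cmv_def)
    have vs0: "vs \<noteq> (\<lambda>_. 0)" using vsk(2) by (auto simp: nsq_def)
    have "laplacian_eigenvalue E ell P L (- (ks\<^sup>2))"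
      by (rule vec_to_eig[OF ksp l vsk(1) vs0 cond])
    then show ?thesis using ks k1_def by auto
  qed
qed



lemma cond_H:
  assumes M: "M > 0" and eps: "0 < \<epsilon>" "\<epsilon> < M" and l: "ell > 0"
    and big: "exp ((M - \<epsilon>) * ell) > (2 * M + \<epsilon>) / \<epsilon>"
  shows "alpha (M - \<epsilon>) ell + beta (M - \<epsilon>) ell < M"
    and "\<forall>\<kappa>\<ge>M + \<epsilon>. alpha \<kappa> ell - beta \<kappa> ell > M"
proof -
  define T where "T = exp ((M - \<epsilon>) * ell)"
  have T1: "T > 1" unfolding T_def using eps l by simp
  have eT: "\<epsilon> * T > 2 * M + \<epsilon>" using big eps unfolding T_def by (simp add: divide_less_eq mult.commute)
  have "(M - \<epsilon>) * (T + 1) < M * (T - 1)" using eT eps by (simp add: algebra_simps)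
  then have "(M - \<epsilon>) * (T + 1) / (T - 1) < M" using T1 by (simp add: divide_less_eq)
  then show "alpha (M - \<epsilon>) ell + beta (M - \<epsilon>) ell < M"
    using alpha_plus_beta[of "M - \<epsilon>" ell] eps l unfolding T_def by simp
  show "\<forall>\<kappa>\<ge>M + \<epsilon>. alpha \<kappa> ell - beta \<kappa> ell > M"
  proof (intro allI impI)
    fix \<kappa> assume k: "\<kappa> \<ge> M + \<epsilon>"
    define T' where "T' = exp (\<kappa> * ell)"
    have "(M - \<epsilon>) * ell \<le> \<kappa> * ell" using k eps l by (intro mult_right_mono) auto
    then have TT: "T \<le> T'" unfolding T_def T'_def by simp
    then have eT': "\<epsilon> * T' > 2 * M + \<epsilon>" using eT eps by (smt (verit) mult_left_mono)
    have T'1: "T' > 1" using TT T1 by simp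
    have "(M + \<epsilon>) * (T' - 1) \<le> \<kappa> * (T' - 1)" using k T'1 by (intro mult_right_mono) auto
    moreover have "(M + \<epsilon>) * (T' - 1) > M * (T' + 1)" using eT' by (simp add: algebra_simps)
    ultimately have "M * (T' + 1) < \<kappa> * (T' - 1)" by linarith
    then have "M < \<kappa> * (T' - 1) / (T' + 1)" using T'1 by (simp add: less_divide_eq)
    then show "alpha \<kappa> ell - beta \<kappa> ell > M"
      using alpha_minus_beta[of \<kappa> ell] k eps l unfolding T'_def by simp
  qed
qed

lemma eps_lower:
  fixes M a :: real
  assumes "M > 0" "a < - (M\<^sup>2)"
  shows "\<exists>\<epsilon>. 0 < \<epsilon> \<and> \<epsilon> < M \<and> a < - ((M + \<epsilon>)\<^sup>2)"
proof -
  define \<delta> where "\<delta> = - (M\<^sup>2) - a"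
  have d: "\<delta> > 0" using assms \<delta>_def by simp
  define \<epsilon> where "\<epsilon> = min (M / 2) (min 1 (\<delta> / (2 * (2 * M + 1))))"
  have e: "0 < \<epsilon>" "\<epsilon> < M" "\<epsilon> \<le> 1" "\<epsilon> \<le> \<delta> / (2 * (2 * M + 1))"
    using assms d by (auto simp: \<epsilon>_def)
  have "\<epsilon> * \<epsilon> \<le> \<epsilon>" using e by (simp add: mult_le_cancel_left1)
  moreover have "\<epsilon> * (2 * (2 * M + 1)) \<le> \<delta>" using e(4) assms by (simp add: le_divide_eq)
  moreover have "(M + \<epsilon>)\<^sup>2 = M\<^sup>2 + \<epsilon> * (2 * M) + \<epsilon> * \<epsilon>" by (simp add: power2_eq_square algebra_simps)
  ultimately have "a < - ((M + \<epsilon>)\<^sup>2)" using d \<delta>_def by (simp add: algebra_simps)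
  then show ?thesis using e by blast
qed

lemma eps_upper:
  fixes M b :: real
  assumes "M > 0" "- (M\<^sup>2) < b"
  shows "\<exists>\<epsilon>. 0 < \<epsilon> \<and> \<epsilon> < M \<and> - ((M - \<epsilon>)\<^sup>2) < b"
proof -
  define \<delta> where "\<delta> = b + M\<^sup>2"
  have d: "\<delta> > 0" using assms \<delta>_def by simp
  define \<epsilon> where "\<epsilon> = min (M / 2) (\<delta> / (4 * M))"
  have e: "0 < \<epsilon>" "\<epsilon> < M" "\<epsilon> \<le> \<delta> / (4 * M)"
    using assms d by (auto simp: \<epsilon>_def)
  have "\<epsilon> * (4 * M) \<le> \<delta>" using e(3) assms by (simp add: le_divide_eq)
  then have "2 * (\<epsilon> * (2 * M)) \<le> \<delta>" by (simp add: algebra_simps)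
  moreover have "\<epsilon> * \<epsilon> \<ge> 0" by simp
  moreover have "(M - \<epsilon>)\<^sup>2 = M\<^sup>2 - \<epsilon> * (2 * M) + \<epsilon> * \<epsilon>" by (simp add: power2_eq_square algebra_simps)
  ultimately have "- ((M - \<epsilon>)\<^sup>2) < b" using d \<delta>_def by linarith
  then show ?thesis using e by blast
qed



theorem proposition3p3:
  fixes E :: nat and l :: "nat \<Rightarrow> real" and P L :: "nat \<Rightarrow> nat \<Rightarrow> complex"
  assumes "E \<ge> 1"
    and "\<forall>e<E. l e > 0"
    and "orth_proj (2 * E) P"
    and "selfadj_on_ker (2 * E) P L"
    and "\<exists>\<mu>\<in>ker_eigenvalues (2 * E) P L. \<mu> > 0"
  shows "(\<forall>\<^sub>F \<eta> in at_top. lowest_eigenvalue E (\<lambda>e. \<eta> * l e) P L < 0) \<and>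
         ((\<lambda>\<eta>. lowest_eigenvalue E (\<lambda>e. \<eta> * l e) P L)
            \<longlongrightarrow> - (Max (ker_eigenvalues (2 * E) P L))\<^sup>2) at_top"
proof -
  note l = assms(2) and P = assms(3) and Ls = assms(4)
  define M where "M = Max (ker_eigenvalues (2 * E) P L)"
  obtain \<mu> where mu: "\<mu> \<in> ker_eigenvalues (2 * E) P L" "\<mu> > 0" using assms(5) by blast
  have ne: "ker_eigenvalues (2 * E) P L \<noteq> {}" using mu by blast
  have Mpos: "M > 0"
  proof -
    have "\<mu> \<le> M" unfolding M_def by (rule Max_ge[OF finite_eig[OF Ls] mu(1)])
    then show ?thesis using mu by simp
  qed
  obtain vm where vm: "vm \<in> Sph (2 * E) P" and Lvm: "cmv (2 * E) L vm = (\<lambda>i. complex_of_real M * vm i)"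
    and rb: "\<forall>w\<in>kerP (2 * E) P. ray (2 * E) L w \<le> M * nsq (2 * E) w"
    using spectral[OF P Ls ne] unfolding M_def by blast
  define low where "low = (\<lambda>\<eta>. lowest_eigenvalue E (\<lambda>e. \<eta> * l e) P L)"
  have ev: "\<forall>\<^sub>F \<eta> in at_top. - ((M + \<epsilon>)\<^sup>2) \<le> low \<eta> \<and> low \<eta> \<le> - ((M - \<epsilon>)\<^sup>2)"
    if eps: "0 < \<epsilon>" "\<epsilon> < M" for \<epsilon>
  proof -
    define K0 where "K0 = (2 * M + \<epsilon>) / \<epsilon>"
    have evb: "\<forall>\<^sub>F \<eta> in at_top. exp ((M - \<epsilon>) * (\<eta> * l e)) > K0" if e: "e < E" for e
    proof -
      have le: "l e > 0" using l e by simp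
      have me: "(M - \<epsilon>) * l e > 0" using le eps by simp
      have "\<forall>\<^sub>F \<eta> in at_top. \<eta> \<ge> (\<bar>K0\<bar> + 1) / ((M - \<epsilon>) * l e)" by simp
      then show ?thesis
      proof (rule eventually_mono)
        fix \<eta> assume h: "\<eta> \<ge> (\<bar>K0\<bar> + 1) / ((M - \<epsilon>) * l e)"
        have "(M - \<epsilon>) * (\<eta> * l e) = \<eta> * ((M - \<epsilon>) * l e)" by (simp add: mult_ac)
        also have "\<dots> \<ge> \<bar>K0\<bar> + 1" using h me by (simp add: divide_le_eq)
        finally have "(M - \<epsilon>) * (\<eta> * l e) \<ge> \<bar>K0\<bar> + 1" .
        moreover have "exp ((M - \<epsilon>) * (\<eta> * l e)) \<ge> 1 + (M - \<epsilon>) * (\<eta> * l e)" by (rule exp_ge_add_one_self)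
        ultimately show "exp ((M - \<epsilon>) * (\<eta> * l e)) > K0" by linarith
      qed
    qed
    have "\<forall>\<^sub>F \<eta> in at_top. \<eta> \<ge> 1 \<and> (\<forall>e\<in>{..<E}. exp ((M - \<epsilon>) * (\<eta> * l e)) > K0)"
      using evb by (intro eventually_conj eventually_ball_finite) auto
    then show ?thesis
    proof (rule eventually_mono)
      fix \<eta> assume h: "\<eta> \<ge> 1 \<and> (\<forall>e\<in>{..<E}. exp ((M - \<epsilon>) * (\<eta> * l e)) > K0)"
      define ell where "ell = (\<lambda>e. \<eta> * l e)"
      have le: "\<forall>e<E. ell e > 0" using h l unfolding ell_def by auto
      have H1: "\<forall>e<E. alpha (M - \<epsilon>) (ell e) + beta (M - \<epsilon>) (ell e) < M"
        using cond_H(1)[OF Mpos eps] le h unfolding ell_def K0_def by auto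
      have H2: "\<forall>\<kappa>\<ge>M + \<epsilon>. \<forall>e<E. alpha \<kappa> (ell e) - beta \<kappa> (ell e) > M"
        using cond_H(2)[OF Mpos eps] le h unfolding ell_def K0_def by auto
      obtain \<kappa> where k: "\<kappa> \<ge> M - \<epsilon>" and eig: "laplacian_eigenvalue E ell P L (- (\<kappa>\<^sup>2))"
        using key_fixed(1)[OF le P Ls vm Lvm rb eps H1 H2] by blast
      have lb: "\<forall>lam. laplacian_eigenvalue E ell P L lam \<longrightarrow> - ((M + \<epsilon>)\<^sup>2) \<le> lam"
        using key_fixed(2)[OF le P Ls vm Lvm rb eps H1 H2] .
      define S where "S = {lam. laplacian_eigenvalue E ell P L lam}"
      have lowS: "low \<eta> = Inf S" unfolding low_def S_def lowest_eigenvalue_def ell_def by simp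
      have bdd: "bdd_below S" unfolding S_def bdd_below_def using lb by blast
      have inS: "- (\<kappa>\<^sup>2) \<in> S" unfolding S_def using eig by simp
      have "Inf S \<le> - (\<kappa>\<^sup>2)" by (rule cInf_lower[OF inS bdd])
      moreover have "(M - \<epsilon>)\<^sup>2 \<le> \<kappa>\<^sup>2" using k eps by (intro power_mono) auto
      moreover have "- ((M + \<epsilon>)\<^sup>2) \<le> Inf S"
        using inS lb unfolding S_def by (intro cInf_greatest) auto
      ultimately show "- ((M + \<epsilon>)\<^sup>2) \<le> low \<eta> \<and> low \<eta> \<le> - ((M - \<epsilon>)\<^sup>2)" unfolding lowS by simp
    qed
  qed
  have part1: "\<forall>\<^sub>F \<eta> in at_top. low \<eta> < 0"
  proof -
    have "\<forall>\<^sub>F \<eta> in at_top. - ((M + M / 2)\<^sup>2) \<le> low \<eta> \<and> low \<eta> \<le> - ((M - M / 2)\<^sup>2)"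
      using ev[of "M / 2"] Mpos by simp
    then show ?thesis
    proof (rule eventually_mono)
      fix \<eta> assume "- ((M + M / 2)\<^sup>2) \<le> low \<eta> \<and> low \<eta> \<le> - ((M - M / 2)\<^sup>2)"
      moreover have "(M - M / 2)\<^sup>2 > 0" using Mpos by simp
      ultimately show "low \<eta> < 0" by linarith
    qed
  qed
  have part2: "(low \<longlongrightarrow> - (M\<^sup>2)) at_top"
  proof (rule order_tendstoI)
    fix a assume a: "a < - (M\<^sup>2)"
    obtain \<epsilon> where e: "0 < \<epsilon>" "\<epsilon> < M" "a < - ((M + \<epsilon>)\<^sup>2)" using eps_lower[OF Mpos a] by blast
    show "\<forall>\<^sub>F \<eta> in at_top. a < low \<eta>"
      using ev[OF e(1,2)] by (rule eventually_mono) (use e(3) in linarith)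
  next
    fix b assume b: "- (M\<^sup>2) < b"
    obtain \<epsilon> where e: "0 < \<epsilon>" "\<epsilon> < M" "- ((M - \<epsilon>)\<^sup>2) < b" using eps_upper[OF Mpos b] by blast
    show "\<forall>\<^sub>F \<eta> in at_top. low \<eta> < b"
      using ev[OF e(1,2)] by (rule eventually_mono) (use e(3) in linarith)
  qed
  show ?thesis using part1 part2 unfolding low_def M_def by simp
qed


end
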